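(* Let $p_1,\ldots,p_m\in[2,\infty]$, $q\in[1,\infty)$, let $S_1\cup\cdots\cup S_m=[k]$ be a partition, and for $u\in\mathbb R^k$ let $\mathcal N_j(u):=(\sum_{i\in S_j}|u_i|^{p_j})^{1/p_j}$ (with $\mathcal N_j(u):=\max_{i\in S_j}|u_i|$ if $p_j=\infty$) and $\mathcal N(u):=\|(\mathcal N_1(u),\ldots,\mathcal N_m(u))\|_q$. Let $A:\mathbb R^n\to\mathbb R^k$ be linear with $\mathrm{rank}(A)=n$, and for linear $U:\mathbb R^n\to\mathbb R^n$ set $\alpha_j(U):=\mathcal N_j(\|UA^\top e_1\|_2,\ldots,\|UA^\top e_k\|_2)$. Then there is a nonnegative diagonal matrix $W$ such that $U=(A^\top WA)^{-1/2}$ satisfies: (1) $\alpha_1(U)^q+\cdots+\alpha_m(U)^q=n$ if $1\le q\le2$ and $=n^{q/2}$ if $q\ge2$; (2) for all $x\in\mathbb R^n$ and $j\in[m]$, $\mathcal N_j(Ax)\le\alpha_j(U)\|U^{-1}x\|_2\le\alpha_j(U)\mathcal N(Ax)$.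
   Context: $e_1,\ldots,e_k$ is the standard basis of $\mathbb R^k$. *)

theory Defs
  imports "HOL-Analysis.Analysis"
begin

definition blocknorm :: "ereal \<Rightarrow> 'k set \<Rightarrow> real^'k \<Rightarrow> real" where
  "blocknorm pj Sj u =
     (if pj = \<infinity> then Max ((\<lambda>i. \<bar>u $ i\<bar>) ` Sj)
      else (\<Sum>i\<in>Sj. \<bar>u $ i\<bar> powr real_of_ereal pj) powr (1 / real_of_ereal pj))"

definition mixnorm :: "('m::finite \<Rightarrow> ereal) \<Rightarrow> ('m \<Rightarrow> 'k set) \<Rightarrow> real \<Rightarrow> real^'k \<Rightarrow> real" where
  "mixnorm p S q u = (\<Sum>j\<in>UNIV. blocknorm (p j) (S j) u powr q) powr (1 / q)"

definition alpha :: "ereal \<Rightarrow> 'k::finite set \<Rightarrow> real^'n^'k \<Rightarrow> real^'n^'n \<Rightarrow> real" where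
  "alpha pj Sj A U = blocknorm pj Sj (\<chi> i. norm (U *v (transpose A *v axis i 1)))"

definition pos_def_mat :: "real^'n^'n \<Rightarrow> bool" where
  "pos_def_mat U \<longleftrightarrow> (\<forall>x. x \<noteq> 0 \<longrightarrow> x \<bullet> (U *v x) > 0)"

text \<open>U is the inverse square root (A^T W A)^(-1/2) of an invertible matrix M:
  the (unique) symmetric positive definite U with U U M = I.\<close>
definition is_inv_sqrt :: "real^'n^'n \<Rightarrow> real^'n^'n \<Rightarrow> bool" where
  "is_inv_sqrt U M \<longleftrightarrow> invertible M \<and> transpose U = U \<and> pos_def_mat U \<and> U ** U ** M = mat 1"

end

theory Submission
  imports Defs
begin

definition psd :: "real^'n^'n \<Rightarrow> bool" where
  "psd V \<longleftrightarrow> (\<forall>x. 0 \<le> x \<bullet> (V *v x))"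

lemma dot_sym:
  fixes V :: "real^'n^'n"
  assumes "transpose V = V"
  shows "x \<bullet> (V *v y) = (V *v x) \<bullet> y"
proof -
  have "x \<bullet> (V *v y) = (x v* V) \<bullet> y" by (simp add: dot_lmul_matrix)
  also have "x v* V = transpose V *v x" by simp
  finally show ?thesis using assms by simp
qed

lemma matrix_inv_works:
  fixes V :: "real^'n^'n"
  assumes "invertible V"
  shows "V ** matrix_inv V = mat 1" "matrix_inv V ** V = mat 1"
proof -
  have "\<exists>A'. V ** A' = mat 1 \<and> A' ** V = mat 1" using assms by (simp add: invertible_def)
  from someI_ex[OF this] show "V ** matrix_inv V = mat 1" "matrix_inv V ** V = mat 1"
    by (simp_all add: matrix_inv_def)
qed

lemma inverse_unique_left:
  fixes V B :: "real^'n^'n"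
  assumes "invertible V" "B ** V = mat 1"
  shows "B = matrix_inv V"
proof -
  have "B = B ** (V ** matrix_inv V)" using matrix_inv_works[OF assms(1)] by simp
  also have "\<dots> = matrix_inv V" by (simp add: matrix_mul_assoc assms(2))
  finally show ?thesis .
qed

lemma inverse_unique_right:
  fixes V B :: "real^'n^'n"
  assumes "invertible V" "V ** B = mat 1"
  shows "B = matrix_inv V"
proof -
  have "B = (matrix_inv V ** V) ** B" using matrix_inv_works[OF assms(1)] by simp
  also have "\<dots> = matrix_inv V" by (simp add: matrix_mul_assoc[symmetric] assms(2))
  finally show ?thesis .
qed

lemma inv_sym:
  fixes V :: "real^'n^'n"
  assumes "transpose V = V" "invertible V"
  shows "transpose (matrix_inv V) = matrix_inv V"
proof -
  have "transpose (matrix_inv V) ** V = mat 1"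
    using matrix_inv_works(1)[OF assms(2)] assms(1)
    by (metis matrix_transpose_mul transpose_mat)
  then show ?thesis using inverse_unique_left[OF assms(2)] by blast
qed

lemma invertible_inv:
  fixes V :: "real^'n^'n"
  assumes "invertible V"
  shows "invertible (matrix_inv V)"
  using matrix_inv_works[OF assms] unfolding invertible_def by blast

lemma psd_pd:
  fixes V :: "real^'n^'n"
  assumes sym: "transpose V = V" and p: "psd V" and inv: "invertible V"
  shows "pos_def_mat V"
  unfolding pos_def_mat_def
proof (intro allI impI)
  fix x :: "real^'n" assume x: "x \<noteq> 0"
  have ge: "0 \<le> x \<bullet> (V *v x)" using p by (simp add: psd_def)
  show "0 < x \<bullet> (V *v x)"
  proof (rule ccontr)
    assume "\<not> 0 < x \<bullet> (V *v x)"
    then have z: "x \<bullet> (V *v x) = 0" using ge by linarith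
    have "V *v x = 0"
    proof -
      let ?y = "V *v x"
      have h: "0 \<le> (x - t *\<^sub>R ?y) \<bullet> (V *v (x - t *\<^sub>R ?y))" for t
        using p by (simp add: psd_def)
      have e: "(x - t *\<^sub>R ?y) \<bullet> (V *v (x - t *\<^sub>R ?y)) = 
          - 2 * t * (?y \<bullet> ?y) + t^2 * (?y \<bullet> (V *v ?y))" for t
      proof -
        have "V *v (x - t *\<^sub>R ?y) = ?y - t *\<^sub>R (V *v ?y)"
          by (simp add: matrix_vector_mult_diff_distrib matrix_vector_mul_linear linear_scale
              scalar_mult_eq_scaleR[symmetric] vector_scalar_commute)
        then have "(x - t *\<^sub>R ?y) \<bullet> (V *v (x - t *\<^sub>R ?y)) = 
             x \<bullet> ?y - t * (x \<bullet> (V *v ?y)) - t * (?y \<bullet> ?y) + t^2 * (?y \<bullet> (V *v ?y))"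
          by (simp add: inner_diff_left inner_diff_right algebra_simps power2_eq_square)
        moreover have "x \<bullet> (V *v ?y) = ?y \<bullet> ?y" using dot_sym[OF sym] by simp
        ultimately show ?thesis using z by simp
      qed
      define a where "a = ?y \<bullet> ?y"
      define b where "b = ?y \<bullet> (V *v ?y)"
      have a0: "0 \<le> a" by (simp add: a_def)
      have hb: "0 \<le> - 2 * t * a + t^2 * b" for t using h[of t] e[of t] by (simp add: a_def b_def)
      have "a = 0"
      proof (rule ccontr)
        assume "a \<noteq> 0" then have ap: "a > 0" using a0 by simp
        have b0: "0 \<le> b" using p by (simp add: psd_def b_def)
        define t where "t = a / (b + 1)"
        have tp: "t > 0" using ap b0 by (simp add: t_def)
        have "t * b < 2 * a"
        proof -
          have "t * b = a * (b / (b+1))" by (simp add: t_def)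
          also have "\<dots> < a * 2" using ap b0 by (intro mult_strict_left_mono) (auto simp: field_simps)
          finally show ?thesis by simp
        qed
        then have "t^2 * b < 2 * t * a" using tp
          by (simp add: power2_eq_square)
        with hb[of t] show False by linarith
      qed
      then show ?thesis by (simp add: a_def)
    qed
    then have "x = 0"
      using inv by (metis inj_matrix_vector_mult inj_eq matrix_vector_mult_0_right)
    with x show False by simp
  qed
qed

lemma trace_transpose: "trace (transpose (M::real^'n^'n)) = trace M"
  by (simp add: trace_def transpose_def)

lemma trace_sq_sym:
  fixes X :: "real^'n^'n"
  assumes "transpose X = X"
  shows "trace (X ** X) = (\<Sum>i\<in>UNIV. \<Sum>j\<in>UNIV. (X$i$j)^2)"
proof -
  have "X$j$i = X$i$j" for i j using assms by (metis transpose_def vec_lambda_beta)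
  then show ?thesis by (simp add: trace_def matrix_matrix_mult_def power2_eq_square)
qed

lemma trace_sq_zero:
  fixes X :: "real^'n^'n"
  assumes "transpose X = X" "trace (X ** X) = 0"
  shows "X = 0"
proof -
  have "(\<Sum>i\<in>UNIV. \<Sum>j\<in>UNIV. (X$i$j)^2) = 0" using assms(2) trace_sq_sym[OF assms(1)] by simp
  then have "\<forall>i\<in>UNIV. (\<Sum>j\<in>UNIV. (X$i$j)^2) = 0"
    by (subst (asm) sum_nonneg_eq_0_iff) (auto intro: sum_nonneg)
  then have "\<forall>i j. (X$i$j)^2 = 0"
    by (metis (no_types, lifting) UNIV_I finite sum_nonneg_eq_0_iff zero_le_power2)
  then show ?thesis by (simp add: vec_eq_iff)
qed

lemma trace_orth_zero:
  fixes X :: "real^'n^'n"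
  assumes "transpose X = X" "\<And>H. transpose H = H \<Longrightarrow> trace (X ** H) = 0"
  shows "X = 0"
  using assms trace_sq_zero by blast

lemma mat_neg_mul: "(- X) ** (Y::real^'n^'n) = - (X ** Y)"
  by (simp add: vec_eq_iff matrix_matrix_mult_def sum_negf)

lemma lyapunov:
  fixes V Y :: "real^'n^'n"
  assumes pd: "pos_def_mat V" and sY: "transpose Y = Y" and eq: "V ** Y + Y ** V = 0"
  shows "Y = 0"
proof -
  have VY: "V ** Y = - (Y ** V)" using eq by (simp add: add_eq_0_iff)
  have "trace (Y ** (V ** Y)) = trace ((V ** Y) ** Y)" by (rule trace_mul_sym)
  also have "(V ** Y) ** Y = - (Y ** (V ** Y))"
  proof -
    have "(V ** Y) ** Y = (- (Y ** V)) ** Y" using VY by simp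
    also have "\<dots> = - ((Y ** V) ** Y)" by (rule mat_neg_mul)
    finally show ?thesis by (simp add: matrix_mul_assoc)
  qed
  also have "trace (- (Y ** (V ** Y))) = - trace (Y ** (V ** Y))"
    by (simp add: trace_def sum_negf)
  finally have t0: "trace (Y ** (V ** Y)) = 0" by simp
  have ysym: "Y$s$k = Y$k$s" for s k using sY by (metis transpose_def vec_lambda_beta)
  have diag: "(Y ** (V ** Y))$k$k = (Y$k) \<bullet> (V *v (Y$k))" for k
    by (simp add: matrix_matrix_mult_def matrix_vector_mult_def inner_vec_def ysym sum_distrib_left
        mult.commute mult.left_commute)
  have nn: "0 \<le> (Y$k) \<bullet> (V *v (Y$k))" for k
    using pd unfolding pos_def_mat_def by (metis inner_zero_left less_le order_refl)
  have "(\<Sum>k\<in>UNIV. (Y$k) \<bullet> (V *v (Y$k))) = 0" using t0 by (simp add: trace_def diag)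
  then have "\<forall>k\<in>UNIV. (Y$k) \<bullet> (V *v (Y$k)) = 0"
    by (subst (asm) sum_nonneg_eq_0_iff) (auto simp: nn)
  then have "\<forall>k. Y$k = 0" using pd unfolding pos_def_mat_def by (metis less_irrefl UNIV_I)
  then show ?thesis by (simp add: vec_eq_iff)
qed

definition diagm :: "('k \<Rightarrow> real) \<Rightarrow> real^'k^'k" where
  "diagm w = (\<chi> i j. if i = j then w i else 0)"

definition Mw :: "real^'n^'k \<Rightarrow> ('k::finite \<Rightarrow> real) \<Rightarrow> real^'n^'n" where
  "Mw A w = transpose A ** diagm w ** A"

lemma Mw_entry: "Mw A w $ r $ s = (\<Sum>i\<in>UNIV. w i * A$i$r * A$i$s)"
proof -
  have "(transpose A ** diagm w) $ r $ i = w i * A$i$r" for i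
    by (simp add: matrix_matrix_mult_def diagm_def transpose_def if_distrib cong: if_cong)
  then show ?thesis by (simp add: Mw_def matrix_matrix_mult_def)
qed

lemma Mw_sym: "transpose (Mw A w) = Mw A w"
  by (simp add: vec_eq_iff transpose_def Mw_entry mult.commute mult.left_commute)

lemma Mw_quad: "x \<bullet> (Mw A w *v x) = (\<Sum>i\<in>UNIV. w i * (A$i \<bullet> x)^2)"
proof -
  have "x \<bullet> (Mw A w *v x) = (\<Sum>r\<in>UNIV. \<Sum>s\<in>UNIV. \<Sum>i\<in>UNIV. w i * (A$i$r * x$r) * (A$i$s * x$s))"
    by (simp add: inner_vec_def matrix_vector_mult_def Mw_entry sum_distrib_left sum_distrib_right
        mult.commute mult.left_commute)
  also have "\<dots> = (\<Sum>r\<in>UNIV. \<Sum>i\<in>UNIV. \<Sum>s\<in>UNIV. w i * (A$i$r * x$r) * (A$i$s * x$s))"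
    by (rule sum.cong[OF refl], rule sum.swap)
  also have "\<dots> = (\<Sum>i\<in>UNIV. \<Sum>r\<in>UNIV. \<Sum>s\<in>UNIV. w i * (A$i$r * x$r) * (A$i$s * x$s))"
    by (rule sum.swap)
  also have "\<dots> = (\<Sum>i\<in>UNIV. w i * ((\<Sum>r\<in>UNIV. A$i$r * x$r) * (\<Sum>s\<in>UNIV. A$i$s * x$s)))"
    by (simp add: sum_distrib_left sum_distrib_right mult.commute mult.left_commute)
  also have "\<dots> = (\<Sum>i\<in>UNIV. w i * (A$i \<bullet> x)^2)"
    by (simp add: inner_vec_def power2_eq_square)
  finally show ?thesis .
qed

lemma trace_Mw:
  fixes A :: "real^'n^'k" and M :: "real^'n^'n"
  shows "trace (Mw A w ** M) = (\<Sum>i\<in>UNIV. w i * (A$i \<bullet> (M *v A$i)))"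
proof -
  have "trace (Mw A w ** M) = (\<Sum>r\<in>UNIV. \<Sum>s\<in>UNIV. \<Sum>i\<in>UNIV. w i * (A$i$r * M$s$r * A$i$s))"
    by (simp add: trace_def matrix_matrix_mult_def Mw_entry sum_distrib_left sum_distrib_right
        mult.commute mult.left_commute)
  also have "\<dots> = (\<Sum>r\<in>UNIV. \<Sum>i\<in>UNIV. \<Sum>s\<in>UNIV. w i * (A$i$r * M$s$r * A$i$s))"
    by (rule sum.cong[OF refl], rule sum.swap)
  also have "\<dots> = (\<Sum>i\<in>UNIV. \<Sum>r\<in>UNIV. \<Sum>s\<in>UNIV. w i * (A$i$r * M$s$r * A$i$s))"
    by (rule sum.swap)
  also have "\<dots> = (\<Sum>i\<in>UNIV. \<Sum>s\<in>UNIV. \<Sum>r\<in>UNIV. w i * (A$i$r * M$s$r * A$i$s))"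
    by (rule sum.cong[OF refl], rule sum.swap)
  also have "\<dots> = (\<Sum>i\<in>UNIV. w i * (A$i \<bullet> (M *v A$i)))"
    by (simp add: inner_vec_def matrix_vector_mult_def sum_distrib_left sum_distrib_right
        mult.commute mult.left_commute)
  finally show ?thesis .
qed

lemma trace_Mw_VH:
  fixes A :: "real^'n^'k" and V H :: "real^'n^'n"
  assumes "transpose V = V"
  shows "trace (Mw A w ** V ** H) = (\<Sum>i\<in>UNIV. w i * ((V *v A$i) \<bullet> (H *v A$i)))"
proof -
  have "trace (Mw A w ** V ** H) = trace (Mw A w ** (V ** H))" by (simp add: matrix_mul_assoc)
  also have "\<dots> = (\<Sum>i\<in>UNIV. w i * (A$i \<bullet> ((V ** H) *v A$i)))" by (rule trace_Mw)
  also have "\<dots> = (\<Sum>i\<in>UNIV. w i * ((V *v A$i) \<bullet> (H *v A$i)))"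
    by (simp add: matrix_vector_mul_assoc[symmetric] dot_sym[OF assms])
  finally show ?thesis .
qed

lemma perm_moves_other:
  assumes p: "p permutes (UNIV::'n set)" and ne: "p \<noteq> id"
  shows "\<exists>y. y \<noteq> x \<and> p y \<noteq> y"
proof -
  obtain y0 where y0: "p y0 \<noteq> y0" using ne by (metis eq_id_iff)
  show ?thesis
  proof (cases "y0 = x")
    case False then show ?thesis using y0 by blast
  next
    case True
    have "p (p x) \<noteq> p x"
    proof
      assume "p (p x) = p x"
      then have "p x = x" using permutes_inj[OF p] by (meson injD)
      then show False using y0 True by simp
    qed
    moreover have "p x \<noteq> x" using y0 True by simp
    ultimately show ?thesis by blast
  qed
qed

lemma det_deriv_I:
  fixes K :: "real^'n^'n"
  shows "((\<lambda>t. det (mat 1 + t *\<^sub>R K)) has_real_derivative trace K) (at 0)"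
proof -
  let ?P = "{p. p permutes (UNIV::'n set)}"
  define e where "e = (\<lambda>p (i::'n) (t::real). (if i = p i then 1 else 0) + t * K$i$(p i))"
  have ent: "(mat 1 + t *\<^sub>R K)$i$(p i) = e p i t" for p i t
    by (simp add: e_def mat_def)
  have dete: "det (mat 1 + t *\<^sub>R K) = (\<Sum>p\<in>?P. of_int (sign p) * (\<Prod>i\<in>UNIV. e p i t))" for t
    unfolding det_def ent ..
  define D where "D = (\<lambda>p. of_int (sign p) * (\<Sum>x\<in>UNIV. K$x$(p x) * (\<Prod>y\<in>UNIV-{x}. e p y 0)))"
  have der: "((\<lambda>t. of_int (sign p) * (\<Prod>i\<in>UNIV. e p i t)) has_real_derivative D p) (at 0)" for p
  proof -
    have "((\<lambda>t. e p i t) has_real_derivative K$i$(p i)) (at 0)" for i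
      unfolding e_def by (auto intro!: derivative_eq_intros)
    then have "((\<lambda>t. \<Prod>i\<in>UNIV. e p i t) has_real_derivative
        (\<Sum>x\<in>UNIV. K$x$(p x) * (\<Prod>y\<in>UNIV-{x}. e p y 0))) (at 0)"
      by (rule has_field_derivative_prod)
    then show ?thesis unfolding D_def by (auto intro!: derivative_eq_intros)
  qed
  have Did: "D id = trace K"
    by (simp add: D_def e_def trace_def sign_id)
  have Dother: "D p = 0" if pP: "p \<in> ?P" and pne: "p \<noteq> id" for p
  proof -
    have "K$x$(p x) * (\<Prod>y\<in>UNIV-{x}. e p y 0) = 0" for x
    proof -
      obtain y where y: "y \<noteq> x" "p y \<noteq> y" using perm_moves_other[of p x] pP pne by auto
      have "e p y 0 = 0" using y by (simp add: e_def)
      then have "(\<Prod>y\<in>UNIV-{x}. e p y 0) = 0"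
        using y by (intro prod_zero) auto
      then show ?thesis by simp
    qed
    then have "(\<Sum>x\<in>UNIV. K$x$(p x) * (\<Prod>y\<in>UNIV-{x}. e p y 0)) = 0"
      by (intro sum.neutral) blast
    then show ?thesis by (simp only: D_def)
  qed
  have idP: "id \<in> ?P" by (simp add: permutes_id)
  have "sum D ?P = D id + sum D (?P - {id})"
    using idP by (simp add: sum.remove)
  also have "sum D (?P - {id}) = 0" using Dother by (intro sum.neutral) auto
  finally have sumD: "sum D ?P = trace K" using Did by (simp add: id_def)
  have "((\<lambda>t. \<Sum>p\<in>?P. of_int (sign p) * (\<Prod>i\<in>UNIV. e p i t)) has_real_derivative sum D ?P) (at 0)"
    by (rule DERIV_sum) (rule der)
  then show ?thesis unfolding dete sumD .
qed

lemma det_deriv: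
  fixes V H :: "real^'n^'n"
  assumes inv: "invertible V"
  shows "((\<lambda>t. det (V + t *\<^sub>R H)) has_real_derivative det V * trace (matrix_inv V ** H)) (at 0)"
proof -
  let ?K = "matrix_inv V ** H"
  have eq: "det (V + t *\<^sub>R H) = det V * det (mat 1 + t *\<^sub>R ?K)" for t
  proof -
    have "V ** (mat 1 + t *\<^sub>R ?K) = V + t *\<^sub>R H"
      using matrix_inv_works[OF inv]
      by (simp add: matrix_add_ldistrib matrix_scalar_ac matrix_mul_assoc scalar_matrix_assoc[symmetric])
    then show ?thesis by (metis det_mul)
  qed
  show ?thesis unfolding eq by (auto intro!: derivative_eq_intros det_deriv_I)
qed

definition bn :: "real \<Rightarrow> 'k set \<Rightarrow> real^'k \<Rightarrow> real" where
  "bn P Sj u = (\<Sum>i\<in>Sj. \<bar>u$i\<bar> powr P) powr (1 / P)"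

definition tv :: "real^'n^'k \<Rightarrow> real^'n^'n \<Rightarrow> real^'k" where
  "tv A V = (\<chi> i. norm (V *v A$i))"

definition GP :: "('m::finite \<Rightarrow> real) \<Rightarrow> ('m \<Rightarrow> 'k set) \<Rightarrow> real \<Rightarrow> real^'n^'k \<Rightarrow> real^'n^'n \<Rightarrow> real" where
  "GP P S q A V = (\<Sum>j\<in>UNIV. bn (P j) (S j) (tv A V) powr q)"

definition sqa :: "real^'n^'k \<Rightarrow> real^'n^'n \<Rightarrow> 'k \<Rightarrow> real" where
  "sqa A V i = (V *v A$i) \<bullet> (V *v A$i)"

definition sig :: "real \<Rightarrow> 'k set \<Rightarrow> real^'n^'k \<Rightarrow> real^'n^'n \<Rightarrow> real" where
  "sig Pj Sj A V = (\<Sum>i\<in>Sj. sqa A V i powr (Pj / 2))"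

lemma norm_powr_sq: "norm (x::'a::real_inner) powr P = (x \<bullet> x) powr (P / 2)"
proof -
  have "norm x = (x \<bullet> x) powr (1/2)" by (simp add: norm_eq_sqrt_inner powr_half_sqrt)
  then show ?thesis by (simp add: powr_powr)
qed

lemma sig_nonneg: "0 \<le> sig Pj Sj A V"
  by (simp add: sig_def sum_nonneg)

lemma bn_tv: "bn Pj Sj (tv A V) = sig Pj Sj A V powr (1 / Pj)"
  by (simp add: bn_def tv_def sig_def sqa_def norm_powr_sq)

lemma GP_alt:
  assumes "\<And>j. P j \<noteq> 0"
  shows "GP P S q A V = (\<Sum>j\<in>UNIV. sig (P j) (S j) A V powr (q / P j))"
  unfolding GP_def bn_tv using assms by (simp add: powr_powr)

lemma sqa_path: "sqa A (V + t *\<^sub>R H) i =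
    sqa A V i + 2 * t * ((V *v A$i) \<bullet> (H *v A$i)) + t^2 * sqa A H i"
proof -
  have "(V + t *\<^sub>R H) *v A$i = V *v A$i + t *\<^sub>R (H *v A$i)"
    by (simp add: matrix_vector_mult_add_rdistrib scaleR_matrix_vector_assoc)
  then show ?thesis
    by (simp add: sqa_def inner_add_left inner_add_right inner_commute power2_eq_square algebra_simps)
qed

lemma pd_nonzero:
  assumes "pos_def_mat V" "a \<noteq> 0"
  shows "V *v a \<noteq> 0"
  using assms unfolding pos_def_mat_def by (metis inner_zero_right less_irrefl)

lemma sqa_pos:
  assumes "pos_def_mat V" "A$i \<noteq> 0"
  shows "0 < sqa A V i"
  using pd_nonzero[OF assms] by (simp add: sqa_def)

lemma sqa_zero:
  assumes "A$i = 0"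
  shows "sqa A V i = 0"
  using assms by (simp add: sqa_def)

definition cc :: "real \<Rightarrow> real \<Rightarrow> 'k set \<Rightarrow> real^'n^'k \<Rightarrow> real^'n^'n \<Rightarrow> 'k \<Rightarrow> real" where
  "cc q Pj Sj A V i = (if A$i = 0 then 0 else
      sig Pj Sj A V powr (q / Pj - 1) * sqa A V i powr (Pj / 2 - 1))"

lemma sig_path_deriv:
  assumes pd: "pos_def_mat V" and Pp: "Pj > 0"
  shows "((\<lambda>t. sig Pj Sj A (V + t *\<^sub>R H)) has_real_derivative
     (\<Sum>i\<in>Sj. (if A$i = 0 then 0 else Pj * sqa A V i powr (Pj/2 - 1) * ((V *v A$i) \<bullet> (H *v A$i))))) (at 0)"
proof -
  have "((\<lambda>t. sqa A (V + t *\<^sub>R H) i powr (Pj / 2)) has_real_derivative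
     (if A$i = 0 then 0 else Pj * sqa A V i powr (Pj/2 - 1) * ((V *v A$i) \<bullet> (H *v A$i)))) (at 0)" for i
  proof (cases "A$i = 0")
    case True
    then show ?thesis by (simp add: sqa_zero)
  next
    case False
    have pos: "0 < sqa A V i" using sqa_pos[OF pd False] .
    have d: "((\<lambda>t. sqa A (V + t *\<^sub>R H) i) has_real_derivative 2 * ((V *v A$i) \<bullet> (H *v A$i))) (at 0)"
      unfolding sqa_path by (auto intro!: derivative_eq_intros)
    have "((\<lambda>t. sqa A (V + t *\<^sub>R H) i powr (Pj / 2)) has_real_derivative
         (Pj/2) * sqa A (V + 0 *\<^sub>R H) i powr (Pj/2 - of_nat 1) * (2 * ((V *v A$i) \<bullet> (H *v A$i)))) (at 0)"
      by (rule DERIV_fun_powr[OF d]) (simp add: pos)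
    then show ?thesis using False by (simp add: mult.assoc)
  qed
  then show ?thesis unfolding sig_def by (intro DERIV_sum) auto
qed

lemma block_path_deriv:
  assumes pd: "pos_def_mat V" and Pp: "Pj > 0" and qp: "q > 0"
  shows "((\<lambda>t. sig Pj Sj A (V + t *\<^sub>R H) powr (q / Pj)) has_real_derivative
     q * (\<Sum>i\<in>Sj. cc q Pj Sj A V i * ((V *v A$i) \<bullet> (H *v A$i)))) (at 0)"
proof (cases "\<forall>i\<in>Sj. A$i = 0")
  case True
  then have "sig Pj Sj A (V + t *\<^sub>R H) = 0" for t by (simp add: sig_def sqa_zero)
  moreover have "cc q Pj Sj A V i = 0" if "i \<in> Sj" for i using True that by (simp add: cc_def)
  ultimately show ?thesis by simp
next
  case False
  then obtain i0 where i0: "i0 \<in> Sj" "A$i0 \<noteq> 0" by blast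
  have fin: "finite Sj" by simp
  have "0 < sqa A V i0 powr (Pj/2)" using sqa_pos[OF pd i0(2)] by simp
  also have "\<dots> \<le> sig Pj Sj A V" unfolding sig_def
    by (rule member_le_sum) (use i0 in auto)
  finally have spos: "0 < sig Pj Sj A V" .
  have "((\<lambda>t. sig Pj Sj A (V + t *\<^sub>R H) powr (q / Pj)) has_real_derivative
     (q / Pj) * sig Pj Sj A (V + 0 *\<^sub>R H) powr (q / Pj - of_nat 1) *
     (\<Sum>i\<in>Sj. (if A$i = 0 then 0 else Pj * sqa A V i powr (Pj/2 - 1) * ((V *v A$i) \<bullet> (H *v A$i))))) (at 0)"
    by (rule DERIV_fun_powr[OF sig_path_deriv[OF pd Pp]]) (simp add: spos)
  moreover have "(q / Pj) * sig Pj Sj A (V + 0 *\<^sub>R H) powr (q / Pj - of_nat 1) *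
     (\<Sum>i\<in>Sj. (if A$i = 0 then 0 else Pj * sqa A V i powr (Pj/2 - 1) * ((V *v A$i) \<bullet> (H *v A$i))))
     = q * (\<Sum>i\<in>Sj. cc q Pj Sj A V i * ((V *v A$i) \<bullet> (H *v A$i)))"
    using Pp apply (simp add: sum_distrib_left)
    apply (rule sum.cong)
     apply (auto simp: cc_def mult_ac)
    done
  ultimately show ?thesis by simp
qed

lemma GP_path_deriv:
  assumes pd: "pos_def_mat V" and Pp: "\<And>j. P j > 0" and qp: "q > 0"
  shows "((\<lambda>t. GP P S q A (V + t *\<^sub>R H)) has_real_derivative
     q * (\<Sum>j\<in>UNIV. \<Sum>i\<in>S j. cc q (P j) (S j) A V i * ((V *v A$i) \<bullet> (H *v A$i)))) (at 0)"
proof -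
  have "P j \<noteq> 0" for j using Pp[of j] by simp
  then have e: "GP P S q A (V + t *\<^sub>R H) = (\<Sum>j\<in>UNIV. sig (P j) (S j) A (V + t *\<^sub>R H) powr (q / P j))" for t
    by (rule GP_alt)
  have "((\<lambda>t. \<Sum>j\<in>UNIV. sig (P j) (S j) A (V + t *\<^sub>R H) powr (q / P j)) has_real_derivative
     (\<Sum>j\<in>UNIV. q * (\<Sum>i\<in>S j. cc q (P j) (S j) A V i * ((V *v A$i) \<bullet> (H *v A$i))))) (at 0)"
    by (rule DERIV_sum) (rule block_path_deriv[OF pd Pp qp])
  then show ?thesis unfolding e by (simp add: sum_distrib_left)
qed

lemma transpose_add': "transpose (X + Y) = transpose X + transpose (Y::real^'n^'m)"
  by (simp add: transpose_def vec_eq_iff)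
lemma transpose_diff': "transpose (X - Y) = transpose X - transpose (Y::real^'n^'m)"
  by (simp add: transpose_def vec_eq_iff)
lemma mat_add_rdistrib: "(X + Y) ** (Z::real^'p^'n) = X ** Z + Y ** (Z::real^'p^'n)" for X Y :: "real^'n^'m"
  by (simp add: matrix_matrix_mult_def vec_eq_iff sum.distrib distrib_right)
lemma mat_diff_rdistrib: "(X - Y) ** (Z::real^'p^'n) = X ** Z - Y ** (Z::real^'p^'n)" for X Y :: "real^'n^'m"
  by (simp add: matrix_matrix_mult_def vec_eq_iff sum_subtractf left_diff_distrib)
lemma mat_diff_ldistrib: "Z ** (X - Y) = Z ** X - Z ** (Y::real^'p^'n)" for Z :: "real^'n^'m"
  by (simp add: matrix_matrix_mult_def vec_eq_iff sum_subtractf right_diff_distrib)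
lemma trace_scaleR: "trace (k *\<^sub>R X) = k * trace (X::real^'n^'n)"
  by (simp add: trace_def sum_distrib_left)

lemma psd_perturb:
  fixes V H :: "real^'n^'n"
  assumes pd: "pos_def_mat V"
  shows "\<exists>d>0. \<forall>h. \<bar>h\<bar> < d \<longrightarrow> psd (V + h *\<^sub>R H)"
proof -
  have "\<exists>x\<in>sphere (0::real^'n) 1. \<forall>y\<in>sphere 0 1. x \<bullet> (V *v x) \<le> y \<bullet> (V *v y)"
  proof (rule continuous_attains_inf)
    show "sphere (0::real^'n) 1 \<noteq> {}"
      by (metis ex_in_conv norm_axis_1 mem_sphere_0)
    show "continuous_on (sphere 0 1) (\<lambda>x. x \<bullet> (V *v x))"
      by (intro continuous_intros)
  qed simp
  then obtain x0 where x0: "norm x0 = 1" and mn: "\<And>y. norm y = 1 \<Longrightarrow> x0 \<bullet> (V *v x0) \<le> y \<bullet> (V *v y)"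
    by auto
  define mu where "mu = x0 \<bullet> (V *v x0)"
  have mup: "mu > 0" using pd x0 unfolding pos_def_mat_def mu_def by (metis norm_zero zero_neq_one)
  define C where "C = (\<Sum>i\<in>UNIV. \<Sum>j\<in>UNIV. \<bar>H$i$j\<bar>)"
  have C0: "0 \<le> C" by (simp add: C_def sum_nonneg)
  have Hb: "\<bar>x \<bullet> (H *v x)\<bar> \<le> C * (norm x)^2" for x :: "real^'n"
  proof -
    have "\<bar>x \<bullet> (H *v x)\<bar> = \<bar>\<Sum>i\<in>UNIV. \<Sum>j\<in>UNIV. x$i * H$i$j * x$j\<bar>"
      by (simp add: inner_vec_def matrix_vector_mult_def sum_distrib_left mult_ac)
    also have "\<dots> \<le> (\<Sum>i\<in>UNIV. \<Sum>j\<in>UNIV. \<bar>x$i * H$i$j * x$j\<bar>)"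
      by (rule order_trans[OF sum_abs]) (intro sum_mono sum_abs)
    also have "\<dots> \<le> (\<Sum>i\<in>UNIV. \<Sum>j\<in>UNIV. \<bar>H$i$j\<bar> * (norm x)^2)"
    proof (intro sum_mono)
      fix i j
      have "\<bar>x$i\<bar> * \<bar>x$j\<bar> \<le> norm x * norm x"
        by (intro mult_mono component_le_norm_cart) auto
      then have "\<bar>x$i\<bar> * \<bar>x$j\<bar> * \<bar>H$i$j\<bar> \<le> norm x * norm x * \<bar>H$i$j\<bar>"
        by (rule mult_right_mono) simp
      then show "\<bar>x$i * H$i$j * x$j\<bar> \<le> \<bar>H$i$j\<bar> * (norm x)^2"
        by (simp add: abs_mult power2_eq_square mult_ac)
    qed
    also have "\<dots> = C * (norm x)^2" by (simp add: C_def sum_distrib_right)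
    finally show ?thesis .
  qed
  have Vb: "mu * (norm x)^2 \<le> x \<bullet> (V *v x)" for x :: "real^'n"
  proof (cases "x = 0")
    case True then show ?thesis by simp
  next
    case False
    let ?y = "(1 / norm x) *\<^sub>R x"
    have "norm ?y = 1" using False by simp
    then have "mu \<le> ?y \<bullet> (V *v ?y)" unfolding mu_def by (rule mn)
    also have "?y \<bullet> (V *v ?y) = (x \<bullet> (V *v x)) / (norm x)^2"
      by (simp add: matrix_vector_mult_scaleR power2_eq_square)
    finally show ?thesis using False by (simp add: field_simps)
  qed
  define d where "d = mu / (C + 1)"
  have dp: "d > 0" using mup C0 by (simp add: d_def)
  have "psd (V + h *\<^sub>R H)" if h: "\<bar>h\<bar> < d" for h
    unfolding psd_def
  proof
    fix x :: "real^'n"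
    have "x \<bullet> ((V + h *\<^sub>R H) *v x) = x \<bullet> (V *v x) + h * (x \<bullet> (H *v x))"
      by (simp add: matrix_vector_mult_add_rdistrib scaleR_matrix_vector_assoc[symmetric] inner_add_right)
    moreover have "\<bar>h * (x \<bullet> (H *v x))\<bar> \<le> d * C * (norm x)^2"
    proof -
      have "\<bar>h * (x \<bullet> (H *v x))\<bar> = \<bar>h\<bar> * \<bar>x \<bullet> (H *v x)\<bar>" by (simp add: abs_mult)
      also have "\<dots> \<le> d * (C * (norm x)^2)"
        using h Hb[of x] by (intro mult_mono) auto
      finally show ?thesis by simp
    qed
    moreover have "d * C \<le> mu"
    proof -
      have "d * C = mu * (C / (C + 1))" by (simp add: d_def)
      also have "\<dots> \<le> mu * 1" using mup C0 by (intro mult_left_mono) auto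
      finally show ?thesis by simp
    qed
    moreover have "d * C * (norm x)^2 \<le> mu * (norm x)^2"
      using calculation(3) by (intro mult_right_mono) auto
    ultimately show "0 \<le> x \<bullet> ((V + h *\<^sub>R H) *v x)" using Vb[of x] by linarith
  qed
  then show ?thesis using dp by blast
qed



lemma pd_invertible:
  fixes V :: "real^'n^'n"
  assumes "pos_def_mat V"
  shows "invertible V"
proof -
  have "\<forall>x. V *v x = 0 \<longrightarrow> x = 0" using pd_nonzero[OF assms] by blast
  then obtain B where "B ** V = mat 1" using matrix_left_invertible_ker by blast
  then show ?thesis unfolding invertible_def using matrix_left_right_inverse by blast
qed

lemma grp_aux: "(r - x) + (r - y) = (r + r) - (y + x)" for r x y :: "'a::ab_group_add"
  by (simp add: algebra_simps)

lemma lagrange_core: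
  fixes V :: "real^'n^'n" and A :: "real^'n^'k" and G :: "real^'n^'n \<Rightarrow> real"
  assumes sym: "transpose V = V" and pd: "pos_def_mat V" and detp: "det V > 0"
    and cp: "c > 0" and qp: "q > 0" and GV: "G V = c"
    and der: "\<And>H. ((\<lambda>t. G (V + t *\<^sub>R H)) has_real_derivative
                    q * (\<Sum>i\<in>UNIV. w0 i * ((V *v A$i) \<bullet> (H *v A$i)))) (at 0)"
    and euler: "(\<Sum>i\<in>UNIV. w0 i * ((V *v A$i) \<bullet> (V *v A$i))) = c"
    and maxi: "\<And>V'. transpose V' = V' \<Longrightarrow> psd V' \<Longrightarrow> G V' \<le> c \<Longrightarrow> det V' \<le> det V"
  shows "matrix_inv V ** matrix_inv V = Mw A (\<lambda>i. (real CARD('n) / c) * w0 i)"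
proof -
  define R where "R = matrix_inv V"
  define n where "n = real CARD('n)"
  have np: "n > 0" by (simp add: n_def)
  have inv: "invertible V" by (rule pd_invertible[OF pd])
  have VR: "V ** R = mat 1" and RV: "R ** V = mat 1" using matrix_inv_works[OF inv] by (simp_all add: R_def)
  have Rsym: "transpose R = R" using inv_sym[OF sym inv] by (simp add: R_def)
  define g where "g = (\<lambda>H::real^'n^'n. \<Sum>i\<in>UNIV. w0 i * ((V *v A$i) \<bullet> (H *v A$i)))"
  define f where "f = (\<lambda>H::real^'n^'n. trace (R ** H))"
  have step1: "f H \<le> 0" if Hs: "transpose H = H" and gH: "g H < 0" for H
  proof (rule ccontr)
    assume "\<not> f H \<le> 0" then have fH: "f H > 0" by simp
    have derH: "((\<lambda>t. G (V + t *\<^sub>R H)) has_real_derivative q * g H) (at 0)"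
      using der[of H] by (simp add: g_def)
    have "q * g H < 0" using qp gH by (simp add: mult_pos_neg)
    from DERIV_neg_dec_right[OF derH this]
    obtain d1 where d1: "d1 > 0" "\<And>h. h > 0 \<Longrightarrow> h < d1 \<Longrightarrow> G (V + 0 *\<^sub>R H) > G (V + (0 + h) *\<^sub>R H)"
      by blast
    obtain d2 where d2: "d2 > 0" "\<And>h. \<bar>h\<bar> < d2 \<Longrightarrow> psd (V + h *\<^sub>R H)"
      using psd_perturb[OF pd, of H] by blast
    have derD: "((\<lambda>t. det (V + t *\<^sub>R H)) has_real_derivative det V * f H) (at 0)"
      using det_deriv[OF inv, of H] by (simp add: f_def R_def)
    have "det V * f H > 0" using detp fH by simp
    from DERIV_pos_inc_right[OF derD this]
    obtain d3 where d3: "d3 > 0" "\<And>h. h > 0 \<Longrightarrow> h < d3 \<Longrightarrow> det (V + 0 *\<^sub>R H) < det (V + (0 + h) *\<^sub>R H)"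
      by blast
    define h where "h = min d1 (min d2 d3) / 2"
    have hp: "h > 0" "h < d1" "h < d2" "h < d3" using d1 d2 d3 by (auto simp: h_def)
    have "transpose (V + h *\<^sub>R H) = V + h *\<^sub>R H"
      using sym Hs by (simp add: transpose_add' transpose_scalar)
    moreover have "psd (V + h *\<^sub>R H)" using d2(2) hp by simp
    moreover have "G (V + h *\<^sub>R H) \<le> c" using d1(2)[of h] hp GV by simp
    ultimately have "det (V + h *\<^sub>R H) \<le> det V" by (rule maxi)
    moreover have "det V < det (V + h *\<^sub>R H)" using d3(2)[of h] hp by simp
    ultimately show False by simp
  qed
  have flin: "f (H - s *\<^sub>R V) = f H - s * n" for H s
    by (simp add: f_def mat_diff_ldistrib matrix_scalar_ac scalar_matrix_assoc[symmetric] RV trace_sub trace_scaleR trace_I n_def)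
  have glin: "g (H - s *\<^sub>R V) = g H - s * c" for H s
  proof -
    have "g (H - s *\<^sub>R V) = g H - s * (\<Sum>i\<in>UNIV. w0 i * ((V *v A$i) \<bullet> (V *v A$i)))"
      by (simp add: g_def matrix_vector_mult_diff_rdistrib scaleR_matrix_vector_assoc[symmetric]
          inner_diff_right sum_subtractf sum_distrib_left right_diff_distrib mult_ac)
    then show ?thesis using euler by simp
  qed
  have fneg: "f (- H) = - f H" for H by (simp add: f_def matrix_matrix_mult_def trace_def sum_negf)
  have mneg: "(- H) *v x = - (H *v x)" for H :: "real^'n^'n" and x
    by (simp add: matrix_vector_mult_def vec_eq_iff sum_negf)
  have gneg: "g (- H) = - g H" for H by (simp add: g_def mneg sum_negf)
  have upper: "f H \<le> n * g H / c" if Hs: "transpose H = H" for H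
  proof (rule field_le_epsilon)
    fix e :: real assume ep: "0 < e"
    define s where "s = (g H + e * c / n) / c"
    have "transpose (H - s *\<^sub>R V) = H - s *\<^sub>R V"
      using Hs sym by (simp add: transpose_diff' transpose_scalar)
    moreover have "g (H - s *\<^sub>R V) < 0"
    proof -
      have "g (H - s *\<^sub>R V) = g H - s * c" by (rule glin)
      also have "s * c = g H + e * c / n" using cp by (simp add: s_def)
      finally show ?thesis using cp np ep by simp
    qed
    ultimately have "f (H - s *\<^sub>R V) \<le> 0" by (rule step1)
    then have "f H \<le> s * n" by (simp add: flin)
    also have "s * n = n * g H / c + e" using cp np by (simp add: s_def field_simps)
    finally show "f H \<le> n * g H / c + e" .
  qed
  have fg: "f H = n * g H / c" if Hs: "transpose H = H" for H
  proof -
    have "transpose (- H) = - H" using Hs by (simp add: transpose_def vec_eq_iff)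
    from upper[OF this] have "- f H \<le> - (n * g H / c)" by (simp add: fneg gneg)
    with upper[OF Hs] show ?thesis by simp
  qed
  define B where "B = Mw A (\<lambda>i. (n / c) * w0 i)"
  have Bsym: "transpose B = B" by (simp add: B_def Mw_sym)
  have trB: "trace (B ** V ** H) = f H" if Hs: "transpose H = H" for H
  proof -
    have "trace (B ** V ** H) = (\<Sum>i\<in>UNIV. (n / c) * w0 i * ((V *v A$i) \<bullet> (H *v A$i)))"
      unfolding B_def by (rule trace_Mw_VH[OF sym])
    also have "\<dots> = n * g H / c" by (simp add: g_def sum_distrib_left sum_divide_distrib mult_ac)
    finally show ?thesis using fg[OF Hs] by simp
  qed
  have trB2: "trace (V ** B ** H) = trace (B ** V ** H)" if Hs: "transpose H = H" for H
  proof -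
    have "trace (V ** B ** H) = trace (transpose (V ** B ** H))" by (simp add: trace_transpose)
    also have "transpose (V ** B ** H) = H ** (B ** V)"
      by (simp add: matrix_transpose_mul Hs Bsym sym matrix_mul_assoc)
    also have "trace (H ** (B ** V)) = trace (B ** V ** H)" by (rule trace_mul_sym)
    finally show ?thesis .
  qed
  define X where "X = R - (1/2) *\<^sub>R (B ** V + V ** B)"
  have Xsym: "transpose X = X"
    by (simp add: X_def transpose_diff' transpose_scalar transpose_add' matrix_transpose_mul Rsym Bsym sym
        add.commute)
  have "trace (X ** H) = 0" if Hs: "transpose H = H" for H
  proof -
    have "X ** H = R ** H - (1/2) *\<^sub>R (B ** V ** H + V ** B ** H)"
      by (simp add: X_def mat_diff_rdistrib mat_add_rdistrib scalar_matrix_assoc[symmetric])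
    then have "trace (X ** H) = f H - (1/2) * (trace (B ** V ** H) + trace (V ** B ** H))"
      by (simp add: trace_sub trace_scaleR trace_add f_def)
    then show ?thesis using trB[OF Hs] trB2[OF Hs] by simp
  qed
  then have X0: "X = 0" using trace_orth_zero[OF Xsym] by blast
  then have R2: "B ** V + V ** B = 2 *\<^sub>R R"
    unfolding X_def by (simp add: algebra_simps scaleR_2)
  define Y where "Y = R ** R - B"
  have Ysym: "transpose Y = Y"
    by (simp add: Y_def transpose_diff' matrix_transpose_mul Rsym Bsym)
  have "V ** Y + Y ** V = 0"
  proof -
    have "V ** Y = R - V ** B"
      by (simp add: Y_def mat_diff_ldistrib matrix_mul_assoc VR)
    moreover have "Y ** V = R - B ** V"
      by (simp add: Y_def mat_diff_rdistrib matrix_mul_assoc[symmetric] RV)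
    ultimately have "V ** Y + Y ** V = (R - V ** B) + (R - B ** V)" by simp
    also have "\<dots> = (R + R) - (B ** V + V ** B)" by (rule grp_aux)
    also have "B ** V + V ** B = R + R" using R2 by (simp add: scaleR_2)
    finally show ?thesis by simp
  qed
  then have "Y = 0" using lyapunov[OF pd Ysym] by blast
  then show ?thesis by (simp add: Y_def B_def R_def n_def)
qed

lemma det_scaleR_pow: "det (s *\<^sub>R V) = s ^ CARD('n) * det (V::real^'n^'n)"
proof -
  have "(\<Prod>i\<in>UNIV. (s *\<^sub>R V)$i$(p i)) = s ^ CARD('n) * (\<Prod>i\<in>UNIV. V$i$(p i))" for p :: "'n \<Rightarrow> 'n"
    by (simp add: prod.distrib)
  then show ?thesis by (simp add: det_def sum_distrib_left mult_ac)
qed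

lemma bn_nonneg: "0 \<le> bn P S u"
  by (simp add: bn_def)

lemma bn_ge_comp:
  assumes "P > 0" "i \<in> S" "finite S"
  shows "\<bar>u$i\<bar> \<le> bn P S u"
proof -
  have "\<bar>u$i\<bar> powr P \<le> (\<Sum>i\<in>S. \<bar>u$i\<bar> powr P)"
    using assms by (intro member_le_sum) auto
  then have "(\<bar>u$i\<bar> powr P) powr (1/P) \<le> (\<Sum>i\<in>S. \<bar>u$i\<bar> powr P) powr (1/P)"
    using assms by (intro powr_mono2) auto
  then show ?thesis using assms by (simp add: bn_def powr_powr)
qed

lemma bn_mono:
  assumes "P > 0" "\<And>i. i \<in> S \<Longrightarrow> \<bar>u$i\<bar> \<le> \<bar>v$i\<bar>"
  shows "bn P S u \<le> bn P S v"
proof -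
  have "(\<Sum>i\<in>S. \<bar>u$i\<bar> powr P) \<le> (\<Sum>i\<in>S. \<bar>v$i\<bar> powr P)"
    using assms by (intro sum_mono powr_mono2) auto
  then show ?thesis unfolding bn_def using assms by (intro powr_mono2) (auto intro: sum_nonneg)
qed

lemma bn_scale:
  assumes "P > 0" "k \<ge> 0"
  shows "bn P S (k *\<^sub>R u) = k * bn P S u"
proof -
  have "(\<Sum>i\<in>S. \<bar>(k *\<^sub>R u)$i\<bar> powr P) = k powr P * (\<Sum>i\<in>S. \<bar>u$i\<bar> powr P)"
    using assms by (simp add: abs_mult powr_mult sum_distrib_left)
  then have "bn P S (k *\<^sub>R u) = (k powr P) powr (1/P) * (\<Sum>i\<in>S. \<bar>u$i\<bar> powr P) powr (1/P)"
    unfolding bn_def using assms by (simp add: powr_mult sum_nonneg)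
  also have "(k powr P) powr (1/P) = k" using assms by (simp add: powr_powr)
  finally show ?thesis by (simp add: bn_def)
qed

lemma bn_le_card:
  assumes P1: "P \<ge> 1" and M: "\<And>i. i \<in> S \<Longrightarrow> \<bar>u$i\<bar> \<le> M" and M0: "M \<ge> 0" and fin: "finite S"
  shows "bn P S u \<le> real (card S) * M"
proof (cases "S = {}")
  case True then show ?thesis by (simp add: bn_def)
next
  case False
  have cS: "real (card S) \<ge> 1" using False fin by (simp add: Suc_le_eq card_gt_0_iff)
  have "(\<Sum>i\<in>S. \<bar>u$i\<bar> powr P) \<le> (\<Sum>i\<in>S. M powr P)"
    using M P1 by (intro sum_mono powr_mono2) auto
  also have "\<dots> = real (card S) * M powr P" by simp
  finally have "bn P S u \<le> (real (card S) * M powr P) powr (1/P)"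
    unfolding bn_def using P1 by (intro powr_mono2) (auto intro: sum_nonneg)
  also have "\<dots> = real (card S) powr (1/P) * M"
    using P1 M0 by (simp add: powr_mult powr_powr)
  also have "real (card S) powr (1/P) \<le> real (card S) powr 1"
    using cS P1 by (intro powr_mono) auto
  then have "real (card S) powr (1/P) * M \<le> real (card S) * M"
    using M0 cS by (intro mult_right_mono) auto
  finally show ?thesis .
qed

lemma bn_continuous:
  assumes "P > 0"
  shows "continuous_on X (\<lambda>u. bn P S u)"
  unfolding bn_def
  using assms by (intro continuous_on_powr' continuous_intros) (auto intro: sum_nonneg)

lemma holder_sum:
  fixes x y :: "'i \<Rightarrow> real"
  assumes th: "0 < \<theta>" "\<theta> \<le> 1" and fin: "finite I"
    and nn: "\<And>i. i \<in> I \<Longrightarrow> 0 \<le> x i" "\<And>i. i \<in> I \<Longrightarrow> 0 \<le> y i"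
  shows "(\<Sum>i\<in>I. x i powr (1 - \<theta>) * y i powr \<theta>) \<le> (\<Sum>i\<in>I. x i) powr (1 - \<theta>) * (\<Sum>i\<in>I. y i) powr \<theta>"
proof -
  define X where "X = (\<Sum>i\<in>I. x i)"
  define Y where "Y = (\<Sum>i\<in>I. y i)"
  have X0: "X \<ge> 0" "Y \<ge> 0" using nn by (auto simp: X_def Y_def intro: sum_nonneg)
  show ?thesis
  proof (cases "X = 0 \<or> Y = 0")
    case True
    then have "\<forall>i\<in>I. x i powr (1 - \<theta>) * y i powr \<theta> = 0"
    proof
      assume "X = 0"
      then have "\<forall>i\<in>I. x i = 0" using nn fin by (simp add: X_def sum_nonneg_eq_0_iff)
      then show ?thesis by simp
    next
      assume "Y = 0"
      then have "\<forall>i\<in>I. y i = 0" using nn fin by (simp add: Y_def sum_nonneg_eq_0_iff)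
      then show ?thesis by simp
    qed
    then have "(\<Sum>i\<in>I. x i powr (1 - \<theta>) * y i powr \<theta>) = 0" by (rule sum.neutral)
    then show ?thesis by (simp add: X_def[symmetric] Y_def[symmetric])
  next
    case False
    then have Xp: "X > 0" "Y > 0" using X0 by auto
    have young: "a powr (1 - \<theta>) * b powr \<theta> \<le> (1 - \<theta>) * a + \<theta> * b" if "a \<ge> 0" "b \<ge> 0" for a b
    proof (cases "a = 0 \<or> b = 0")
      case True then show ?thesis using that th by auto
    next
      case False
      then show ?thesis using Youngs_inequality_0[of "1 - \<theta>" \<theta> a b] that th by auto
    qed
    have trm: "x i powr (1 - \<theta>) * y i powr \<theta> \<le>
        X powr (1 - \<theta>) * Y powr \<theta> * ((1 - \<theta>) * (x i / X) + \<theta> * (y i / Y))" if i: "i \<in> I" for i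
    proof -
      have "x i powr (1 - \<theta>) * y i powr \<theta> = X powr (1 - \<theta>) * Y powr \<theta> *
          ((x i / X) powr (1 - \<theta>) * (y i / Y) powr \<theta>)"
        using Xp nn[OF i] by (simp add: powr_divide)
      also have "\<dots> \<le> X powr (1 - \<theta>) * Y powr \<theta> * ((1 - \<theta>) * (x i / X) + \<theta> * (y i / Y))"
        using Xp nn[OF i] by (intro mult_left_mono young) auto
      finally show ?thesis .
    qed
    have "(\<Sum>i\<in>I. x i powr (1 - \<theta>) * y i powr \<theta>) \<le>
        (\<Sum>i\<in>I. X powr (1 - \<theta>) * Y powr \<theta> * ((1 - \<theta>) * (x i / X) + \<theta> * (y i / Y)))"
      by (intro sum_mono trm)
    also have "\<dots> = (\<Sum>i\<in>I. (X powr (1 - \<theta>) * Y powr \<theta> * ((1 - \<theta>) / X)) * x i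
                         + (X powr (1 - \<theta>) * Y powr \<theta> * (\<theta> / Y)) * y i)"
      by (intro sum.cong refl) (simp add: algebra_simps)
    also have "\<dots> = (X powr (1 - \<theta>) * Y powr \<theta> * ((1 - \<theta>) / X)) * X
                   + (X powr (1 - \<theta>) * Y powr \<theta> * (\<theta> / Y)) * Y"
      by (simp only: sum.distrib sum_distrib_left[symmetric] X_def[symmetric] Y_def[symmetric])
    also have "\<dots> = X powr (1 - \<theta>) * Y powr \<theta>" using Xp by (simp add: field_simps)
    finally show ?thesis by (simp add: X_def Y_def)
  qed
qed

definition blk :: "('m \<Rightarrow> 'k set) \<Rightarrow> 'k \<Rightarrow> 'm" where
  "blk S i = (SOME j. i \<in> S j)"

lemma blk_mem:
  assumes "(\<Union>j. S j) = UNIV"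
  shows "i \<in> S (blk S i)"
proof -
  have "\<exists>j. i \<in> S j" using assms by blast
  then show ?thesis unfolding blk_def by (rule someI_ex)
qed

lemma blk_eq:
  assumes cov: "(\<Union>j. S j) = UNIV" and disj: "\<And>j j'. j \<noteq> j' \<Longrightarrow> S j \<inter> S j' = {}"
    and i: "i \<in> S j"
  shows "blk S i = j"
  using blk_mem[OF cov, of i] disj i by blast

lemma sum_partition:
  fixes S :: "'m::finite \<Rightarrow> 'k::finite set"
  assumes cov: "(\<Union>j. S j) = UNIV" and disj: "\<And>j j'. j \<noteq> j' \<Longrightarrow> S j \<inter> S j' = {}"
  shows "(\<Sum>j\<in>UNIV. \<Sum>i\<in>S j. f j i) = (\<Sum>i\<in>UNIV. f (blk S i) i)"
proof -
  have "(\<Sum>i\<in>UNIV. f (blk S i) i) = (\<Sum>i\<in>(\<Union>j. S j). f (blk S i) i)" using cov by simp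
  also have "\<dots> = (\<Sum>j\<in>UNIV. \<Sum>i\<in>S j. f (blk S i) i)"
    by (rule sum.UNION_disjoint) (use disj in auto)
  also have "\<dots> = (\<Sum>j\<in>UNIV. \<Sum>i\<in>S j. f j i)"
    using blk_eq[OF cov disj] by (intro sum.cong refl) auto
  finally show ?thesis by simp
qed

lemma Av_comp: "(A *v x) $ i = A$i \<bullet> x"
  by (simp add: matrix_vector_mult_def inner_vec_def)

lemma mv_comp_transpose: "(V ** transpose A) $ r $ i = (V *v A$i) $ r"
  by (simp add: matrix_matrix_mult_def matrix_vector_mult_def transpose_def)

lemma mm_entry: "(X ** Y)$r$s = (\<Sum>i\<in>UNIV. X$r$i * Y$i$s)"
  by (simp add: matrix_matrix_mult_def)

lemma norm_mat_le: "norm (V::real^'n^'m) \<le> (\<Sum>r\<in>UNIV. \<Sum>s\<in>UNIV. \<bar>V$r$s\<bar>)"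
proof -
  have "norm V \<le> (\<Sum>r\<in>UNIV. norm (V$r))"
    unfolding norm_vec_def by (rule L2_set_le_sum) simp
  also have "\<dots> \<le> (\<Sum>r\<in>UNIV. \<Sum>s\<in>UNIV. \<bar>V$r$s\<bar>)"
    by (intro sum_mono norm_le_l1_cart)
  finally show ?thesis .
qed

lemma rank_bound_mat:
  fixes A :: "real^'n^'k"
  assumes rankA: "rank A = CARD('n)"
  shows "\<exists>C\<ge>0. \<forall>(V::real^'n^'n) T. (\<forall>i. norm (V *v A$i) \<le> T) \<longrightarrow> norm V \<le> C * T"
proof -
  have "rank (transpose A) = CARD('n)" using rankA by (simp add: rank_transpose)
  then have "surj ((*v) (transpose A))" by (simp add: full_rank_surjective)
  then obtain Bm where Bm: "transpose A ** Bm = mat 1"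
    using matrix_right_invertible_surjective by blast
  define C where "C = (\<Sum>r\<in>(UNIV::'n set). \<Sum>s\<in>(UNIV::'n set). \<Sum>i\<in>(UNIV::'k set). \<bar>Bm$i$s\<bar>)"
  have C0: "C \<ge> 0" by (simp add: C_def sum_nonneg)
  have "norm V \<le> C * T" if hT: "\<forall>i. norm (V *v A$i) \<le> T" for V :: "real^'n^'n" and T
  proof -
    have VV: "V = (V ** transpose A) ** Bm" using Bm by (simp add: matrix_mul_assoc[symmetric])
    have ent: "\<bar>V$r$s\<bar> \<le> (\<Sum>i\<in>UNIV. \<bar>Bm$i$s\<bar>) * T" for r s
    proof -
      have "V$r$s = ((V ** transpose A) ** Bm)$r$s" using VV by simp
      also have "\<dots> = (\<Sum>i\<in>UNIV. (V ** transpose A)$r$i * Bm$i$s)"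
        by (rule mm_entry)
      finally have "V$r$s = (\<Sum>i\<in>UNIV. (V *v A$i)$r * Bm$i$s)"
        by (simp only: mv_comp_transpose)
      then have "\<bar>V$r$s\<bar> \<le> (\<Sum>i\<in>UNIV. \<bar>(V *v A$i)$r\<bar> * \<bar>Bm$i$s\<bar>)"
        by (simp add: order_trans[OF sum_abs] abs_mult)
      also have "\<dots> \<le> (\<Sum>i\<in>UNIV. T * \<bar>Bm$i$s\<bar>)"
        by (intro sum_mono mult_right_mono order_trans[OF component_le_norm_cart] hT[rule_format]) auto
      finally show ?thesis by (simp add: sum_distrib_left mult_ac)
    qed
    have "norm V \<le> (\<Sum>r\<in>UNIV. \<Sum>s\<in>UNIV. \<bar>V$r$s\<bar>)" by (rule norm_mat_le)
    also have "\<dots> \<le> (\<Sum>r\<in>(UNIV::'n set). \<Sum>s\<in>UNIV. (\<Sum>i\<in>UNIV. \<bar>Bm$i$s\<bar>) * T)"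
      by (rule sum_mono, rule sum_mono, rule ent)
    also have "\<dots> = C * T" by (simp add: C_def sum_distrib_right)
    finally show ?thesis .
  qed
  then show ?thesis using C0 by blast
qed

lemma tv_scale: "s \<ge> 0 \<Longrightarrow> tv A (s *\<^sub>R V) = s *\<^sub>R tv A V"
  by (simp add: tv_def vec_eq_iff scaleR_matrix_vector_assoc[symmetric])

lemma GP_scale:
  assumes "\<And>j. P j > 0" "s \<ge> 0"
  shows "GP P S q A (s *\<^sub>R V) = s powr q * GP P S q A V"
  using assms by (simp add: GP_def tv_scale bn_scale powr_mult bn_nonneg sum_distrib_left)

lemma GP_nonneg: "0 \<le> GP P S q A V"
  by (simp add: GP_def sum_nonneg)

lemma GP_bound_comp:
  fixes S :: "'m::finite \<Rightarrow> 'k::finite set"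
  assumes cov: "(\<Union>j. S j) = UNIV" and Pp: "\<And>j. P j > 0" and qp: "q > 0"
    and G: "GP P S q A V \<le> c"
  shows "norm (V *v A$i) \<le> c powr (1/q)"
proof -
  let ?j = "blk S i"
  have "norm (V *v A$i) = \<bar>tv A V $ i\<bar>" by (simp add: tv_def)
  also have "\<dots> \<le> bn (P ?j) (S ?j) (tv A V)"
    using blk_mem[OF cov] Pp by (intro bn_ge_comp) auto
  also have "bn (P ?j) (S ?j) (tv A V) = (bn (P ?j) (S ?j) (tv A V) powr q) powr (1/q)"
    using qp by (simp add: powr_powr bn_nonneg)
  also have "\<dots> \<le> c powr (1/q)"
  proof (intro powr_mono2)
    have "bn (P ?j) (S ?j) (tv A V) powr q \<le> GP P S q A V"
      unfolding GP_def by (intro member_le_sum) auto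
    then show "bn (P ?j) (S ?j) (tv A V) powr q \<le> c" using G by simp
  qed (use qp in auto)
  finally show ?thesis .
qed

lemma cont_mv: "continuous_on X (\<lambda>V::real^'n^'m. V *v a)"
proof -
  have e: "(\<lambda>V::real^'n^'m. V *v a) = (\<lambda>V. \<chi> r. \<Sum>s\<in>UNIV. V$r$s * a$s)"
    by (simp add: matrix_vector_mult_def)
  show ?thesis unfolding e by (intro continuous_intros)
qed

lemma tv_continuous: "continuous_on X (tv A)"
proof -
  have e: "tv A = (\<lambda>V. \<chi> i. norm (V *v A$i))" by (simp add: tv_def fun_eq_iff)
  show ?thesis unfolding e by (intro continuous_intros cont_mv)
qed

lemma GP_continuous:
  assumes "\<And>j. P j > 0" "q > 0"
  shows "continuous_on X (GP P S q A)"
proof -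
  have e: "GP P S q A = (\<lambda>V. \<Sum>j\<in>UNIV. bn (P j) (S j) (tv A V) powr q)" by (simp add: GP_def fun_eq_iff)
  have "continuous_on X (\<lambda>V. bn (P j) (S j) (tv A V))" for j
    using continuous_on_compose[OF tv_continuous bn_continuous[OF assms(1)[of j]]]
    by (simp add: comp_def)
  then show ?thesis unfolding e using assms
    by (intro continuous_intros continuous_on_powr') (auto simp: bn_nonneg)
qed

lemma det_continuous: "continuous_on X (det :: real^'n^'n \<Rightarrow> real)"
proof -
  have e: "(det :: real^'n^'n \<Rightarrow> real) = (\<lambda>V. \<Sum>p\<in>{p. p permutes (UNIV::'n set)}. of_int (sign p) * (\<Prod>i\<in>UNIV. V$i$(p i)))"
    by (simp add: fun_eq_iff det_def)
  show ?thesis unfolding e by (intro continuous_intros)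
qed

lemma closed_sym: "closed {V::real^'n^'n. transpose V = V}"
proof -
  have e: "{V::real^'n^'n. transpose V = V} = {V. \<forall>i. \<forall>j. V$i$j = V$j$i}"
    by (auto simp: vec_eq_iff transpose_def)
  show ?thesis unfolding e
    by (intro closed_Collect_all closed_Collect_eq continuous_intros continuous_on_id)
qed

lemma closed_psd: "closed {V::real^'n^'n. psd V}"
  unfolding psd_def
  by (intro closed_Collect_all closed_Collect_le continuous_intros cont_mv)

lemma feasible_small:
  fixes S :: "'m::finite \<Rightarrow> 'k::finite set" and A :: "real^'n^'k"
  assumes cp: "c > 0" and qp: "q > 0"
  shows "\<exists>\<epsilon>>0. \<forall>P. (\<forall>j. P j \<ge> 1) \<longrightarrow> GP P S q A (\<epsilon> *\<^sub>R mat 1) \<le> c"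
proof -
  define L where "L = (\<Sum>i\<in>UNIV. norm (A$i))"
  define cm where "cm = real CARD('m)"
  define ck where "ck = real CARD('k)"
  define r where "r = (c / cm) powr (1/q)"
  define eps where "eps = r / (ck * L + 1)"
  have L0: "L \<ge> 0" by (simp add: L_def sum_nonneg)
  have cmp: "cm > 0" and ckp: "ck > 0" by (simp_all add: cm_def ck_def)
  have rp: "r > 0" using cp cmp by (simp add: r_def)
  have "ck * L + 1 > 0" using L0 ckp by (simp add: add_nonneg_pos)
  then have ep: "eps > 0" using rp by (simp add: eps_def)
  have key: "ck * (eps * L) \<le> r"
  proof -
    have "ck * (eps * L) = r * (ck * L / (ck * L + 1))" by (simp add: eps_def)
    also have "\<dots> \<le> r * 1"
    proof (intro mult_left_mono)
      have "ck * L + 1 > 0" using L0 ckp by (simp add: add_nonneg_pos)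
      then show "ck * L / (ck * L + 1) \<le> 1" by (simp add: divide_le_eq)
    qed (use rp in auto)
    finally show ?thesis by simp
  qed
  have "GP P S q A (eps *\<^sub>R mat 1) \<le> c" if P1: "\<forall>j. P j \<ge> 1" for P
  proof -
    have tvb: "\<bar>tv A (eps *\<^sub>R mat 1) $ i\<bar> \<le> eps * L" for i
    proof -
      have "tv A (eps *\<^sub>R mat 1) $ i = eps * norm (A$i)"
        using ep by (simp add: tv_def scaleR_matrix_vector_assoc[symmetric])
      moreover have "norm (A$i) \<le> L" unfolding L_def by (rule member_le_sum) auto
      ultimately show ?thesis using ep by (simp add: mult_left_mono)
    qed
    have bnb: "bn (P j) (S j) (tv A (eps *\<^sub>R mat 1)) \<le> r" for j
    proof -
      have "bn (P j) (S j) (tv A (eps *\<^sub>R mat 1)) \<le> real (card (S j)) * (eps * L)"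
        using P1 tvb ep L0 by (intro bn_le_card) auto
      also have "\<dots> \<le> ck * (eps * L)"
        unfolding ck_def using ep L0 by (intro mult_right_mono) (auto simp: card_mono)
      finally show ?thesis using key by simp
    qed
    have "GP P S q A (eps *\<^sub>R mat 1) \<le> (\<Sum>j\<in>(UNIV::'m set). r powr q)"
      unfolding GP_def using qp by (intro sum_mono powr_mono2 bnb) (auto simp: bn_nonneg)
    also have "\<dots> = cm * (c / cm)" using cp cmp qp by (simp add: cm_def r_def powr_powr)
    also have "\<dots> = c" using cmp by simp
    finally show ?thesis .
  qed
  then show ?thesis using ep by blast
qed

lemma euler_block:
  assumes pd: "pos_def_mat V" and Pp: "Pj > 0"
  shows "(\<Sum>i\<in>Sj. cc q Pj Sj A V i * sqa A V i) = sig Pj Sj A V powr (q / Pj)"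
proof (cases "sig Pj Sj A V = 0")
  case True
  then have "\<forall>i\<in>Sj. cc q Pj Sj A V i * sqa A V i = 0" by (auto simp: cc_def)
  then have "(\<Sum>i\<in>Sj. cc q Pj Sj A V i * sqa A V i) = 0" by (rule sum.neutral)
  then show ?thesis using True by simp
next
  case False
  then have sp: "sig Pj Sj A V > 0" using sig_nonneg[of Pj Sj A V] by simp
  have "(\<Sum>i\<in>Sj. cc q Pj Sj A V i * sqa A V i) =
      (\<Sum>i\<in>Sj. sig Pj Sj A V powr (q / Pj - 1) * sqa A V i powr (Pj / 2))"
  proof (intro sum.cong refl)
    fix i
    show "cc q Pj Sj A V i * sqa A V i = sig Pj Sj A V powr (q / Pj - 1) * sqa A V i powr (Pj / 2)"
    proof (cases "A$i = 0")
      case True then show ?thesis using Pp by (simp add: cc_def sqa_zero)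
    next
      case False
      have sq: "sqa A V i > 0" using sqa_pos[OF pd False] .
      have "sqa A V i powr (Pj / 2 - 1) * sqa A V i = sqa A V i powr (Pj / 2)"
        using sq by (simp add: powr_diff)
      then show ?thesis using False by (simp add: cc_def mult.assoc)
    qed
  qed
  also have "\<dots> = sig Pj Sj A V powr (q / Pj - 1) * sig Pj Sj A V"
    by (simp add: sig_def sum_distrib_left)
  also have "\<dots> = sig Pj Sj A V powr (q / Pj)"
    using sp by (simp add: powr_diff)
  finally show ?thesis .
qed

lemma fv_core:
  fixes P :: "'m::finite \<Rightarrow> real" and S :: "'m \<Rightarrow> 'k::finite set" and A :: "real^'n^'k"
  assumes P2: "\<And>j. P j \<ge> 2" and q1: "q \<ge> 1"
    and cov: "(\<Union>j. S j) = UNIV" and disj: "\<And>j j'. j \<noteq> j' \<Longrightarrow> S j \<inter> S j' = {}"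
    and rankA: "rank A = CARD('n)" and cp: "c > 0"
  shows "\<exists>V. transpose V = V \<and> pos_def_mat V \<and> GP P S q A V = c \<and> det V > 0 \<and>
     (\<forall>V'. transpose V' = V' \<and> psd V' \<and> GP P S q A V' \<le> c \<longrightarrow> det V' \<le> det V) \<and>
     matrix_inv V ** matrix_inv V =
       Mw A (\<lambda>i. (real CARD('n) / c) * cc q (P (blk S i)) (S (blk S i)) A V i)"
proof -
  have Pp: "\<And>j. P j > 0" using P2 by (smt (verit))
  have qp: "q > 0" using q1 by simp
  define K where "K = {V::real^'n^'n. transpose V = V} \<inter> {V. psd V} \<inter> {V. GP P S q A V \<le> c}"
  obtain C where C0: "C \<ge> 0" and Cb: "\<And>(V::real^'n^'n) T. (\<forall>i. norm (V *v A$i) \<le> T) \<Longrightarrow> norm V \<le> C * T"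
    using rank_bound_mat[OF rankA] by blast
  have bK: "bounded K"
  proof -
    have "norm V \<le> C * c powr (1/q)" if "V \<in> K" for V
    proof -
      have "\<forall>i. norm (V *v A$i) \<le> c powr (1/q)"
        using that GP_bound_comp[OF cov Pp qp, where A=A and V=V and c=c] by (auto simp: K_def)
      then show ?thesis by (rule Cb)
    qed
    then show ?thesis unfolding bounded_iff by blast
  qed
  have cK: "closed K"
    unfolding K_def
    by (intro closed_Int closed_sym closed_psd closed_Collect_le GP_continuous Pp qp continuous_on_const)
  have compK: "compact K" using bK cK by (simp add: compact_eq_bounded_closed)
  obtain eps where ep: "eps > 0" and feas: "\<And>P'. (\<forall>j. P' j \<ge> 1) \<Longrightarrow> GP P' S q A (eps *\<^sub>R mat 1) \<le> c"
    using feasible_small[OF cp qp, of S A] by blast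
  define V1 where "V1 = eps *\<^sub>R (mat 1 :: real^'n^'n)"
  have V1K: "V1 \<in> K"
  proof -
    have "transpose V1 = V1" by (simp add: V1_def transpose_scalar)
    moreover have "psd V1" using ep by (simp add: psd_def V1_def scaleR_matrix_vector_assoc[symmetric])
    moreover have "GP P S q A V1 \<le> c" unfolding V1_def using P2 by (intro feas) (smt (verit))
    ultimately show ?thesis by (simp add: K_def)
  qed
  have dV1: "det V1 > 0" using ep by (simp add: V1_def det_scaleR_pow)
  obtain V0 where V0K: "V0 \<in> K" and V0max: "\<And>V'. V' \<in> K \<Longrightarrow> det V' \<le> det V0"
    using continuous_attains_sup[OF compK _ det_continuous] V1K by blast
  have sym: "transpose V0 = V0" and psd0: "psd V0" and G0: "GP P S q A V0 \<le> c"
    using V0K by (auto simp: K_def)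
  have detp: "det V0 > 0" using V0max[OF V1K] dV1 by simp
  have inv: "invertible V0" using detp by (simp add: invertible_det_nz)
  have pd: "pos_def_mat V0" by (rule psd_pd[OF sym psd0 inv])
  have GV0: "GP P S q A V0 = c"
  proof (rule ccontr)
    assume "GP P S q A V0 \<noteq> c"
    then have lt: "GP P S q A V0 < c" using G0 by simp
    obtain s where s1: "s > 1" and sG: "s powr q * GP P S q A V0 \<le> c"
    proof (cases "GP P S q A V0 = 0")
      case True
      then show ?thesis using that[of 2] cp by simp
    next
      case False
      then have gp: "GP P S q A V0 > 0" using GP_nonneg[of P S q A V0] by simp
      define s where "s = (c / GP P S q A V0) powr (1/q)"
      have "s > 1" using lt gp qp by (simp add: s_def)
      moreover have "s powr q * GP P S q A V0 = c" using gp cp qp by (simp add: s_def powr_powr)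
      ultimately show ?thesis using that by simp
    qed
    have "s *\<^sub>R V0 \<in> K"
    proof -
      have "transpose (s *\<^sub>R V0) = s *\<^sub>R V0" using sym by (simp add: transpose_scalar)
      moreover have "psd (s *\<^sub>R V0)"
        using psd0 s1 by (simp add: psd_def scaleR_matrix_vector_assoc[symmetric])
      moreover have "GP P S q A (s *\<^sub>R V0) \<le> c" using sG s1 by (simp add: GP_scale[OF Pp])
      ultimately show ?thesis by (simp add: K_def)
    qed
    then have "det (s *\<^sub>R V0) \<le> det V0" by (rule V0max)
    moreover have "det (s *\<^sub>R V0) > det V0"
    proof -
      have "s ^ CARD('n) > 1" using s1 by (simp add: one_less_power)
      then have "s ^ CARD('n) * det V0 > 1 * det V0" using detp by (intro mult_strict_right_mono) auto
      then show ?thesis by (simp add: det_scaleR_pow)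
    qed
    ultimately show False by simp
  qed
  define w0 where "w0 = (\<lambda>i. cc q (P (blk S i)) (S (blk S i)) A V0 i)"
  have der: "((\<lambda>t. GP P S q A (V0 + t *\<^sub>R H)) has_real_derivative
                    q * (\<Sum>i\<in>UNIV. w0 i * ((V0 *v A$i) \<bullet> (H *v A$i)))) (at 0)" for H
  proof -
    have "(\<Sum>j\<in>UNIV. \<Sum>i\<in>S j. cc q (P j) (S j) A V0 i * ((V0 *v A$i) \<bullet> (H *v A$i))) =
        (\<Sum>i\<in>UNIV. w0 i * ((V0 *v A$i) \<bullet> (H *v A$i)))"
      unfolding w0_def by (rule sum_partition[OF cov disj])
    with GP_path_deriv[where P=P and S=S and A=A and H=H, OF pd Pp qp] show ?thesis by simp
  qed
  have euler: "(\<Sum>i\<in>UNIV. w0 i * ((V0 *v A$i) \<bullet> (V0 *v A$i))) = c"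
  proof -
    have "(\<Sum>i\<in>UNIV. w0 i * ((V0 *v A$i) \<bullet> (V0 *v A$i))) =
        (\<Sum>j\<in>UNIV. \<Sum>i\<in>S j. cc q (P j) (S j) A V0 i * sqa A V0 i)"
      unfolding w0_def sqa_def by (rule sum_partition[OF cov disj, symmetric])
    also have "\<dots> = (\<Sum>j\<in>UNIV. sig (P j) (S j) A V0 powr (q / P j))"
      by (intro sum.cong refl euler_block[OF pd Pp])
    also have "\<dots> = GP P S q A V0" using GP_alt[of P S q A V0] Pp by (simp add: less_imp_neq[symmetric])
    finally show ?thesis using GV0 by simp
  qed
  have maxi: "det V' \<le> det V0" if "transpose V' = V'" "psd V'" "GP P S q A V' \<le> c" for V'
    using that by (intro V0max) (simp add: K_def)
  have "matrix_inv V0 ** matrix_inv V0 = Mw A (\<lambda>i. (real CARD('n) / c) * w0 i)"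
    by (rule lagrange_core[OF sym pd detp cp qp GV0 der euler maxi])
  then show ?thesis using sym pd GV0 detp maxi unfolding w0_def by blast
qed

definition mixP :: "('m::finite \<Rightarrow> real) \<Rightarrow> ('m \<Rightarrow> 'k set) \<Rightarrow> real \<Rightarrow> real^'k \<Rightarrow> real" where
  "mixP P S q u = (\<Sum>j\<in>UNIV. bn (P j) (S j) u powr q) powr (1 / q)"

lemma block_holder:
  fixes u :: "real^'k" and A :: "real^'n^'k"
  assumes pd: "pos_def_mat V" and P2: "Pj \<ge> 2" and fin: "finite Sj"
  shows "(\<Sum>i\<in>Sj. cc q Pj Sj A V i * (u$i)^2) \<le> sig Pj Sj A V powr ((q - 2) / Pj) * bn Pj Sj u ^ 2"
proof (cases "sig Pj Sj A V = 0")
  case True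
  then have "\<forall>i\<in>Sj. cc q Pj Sj A V i * (u$i)^2 = 0" by (auto simp: cc_def)
  then have "(\<Sum>i\<in>Sj. cc q Pj Sj A V i * (u$i)^2) = 0" by (rule sum.neutral)
  then show ?thesis using True by simp
next
  case False
  then have sp: "sig Pj Sj A V > 0" using sig_nonneg[of Pj Sj A V] by simp
  have Pp: "Pj > 0" using P2 by simp
  define th where "th = 2 / Pj"
  have th: "0 < th" "th \<le> 1" using P2 by (auto simp: th_def)
  define xx where "xx = (\<lambda>i. sqa A V i powr (Pj / 2))"
  define yy where "yy = (\<lambda>i. \<bar>u$i\<bar> powr Pj)"
  have sqnn: "0 \<le> sqa A V i" for i by (simp add: sqa_def)
  have eq1: "cc q Pj Sj A V i * (u$i)^2 = sig Pj Sj A V powr (q / Pj - 1) * (xx i powr (1 - th) * yy i powr th)"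
    if "i \<in> Sj" for i
  proof (cases "A$i = 0")
    case True then show ?thesis by (simp add: cc_def xx_def sqa_zero)
  next
    case False
    have ex: "Pj / 2 * (1 - th) = Pj / 2 - 1" using Pp by (simp add: th_def field_simps)
    have "xx i powr (1 - th) = sqa A V i powr (Pj / 2 * (1 - th))"
      by (simp only: xx_def powr_powr)
    then have "xx i powr (1 - th) = sqa A V i powr (Pj / 2 - 1)" by (simp only: ex)
    moreover have "yy i powr th = (u$i)^2"
    proof -
      have "yy i powr th = \<bar>u$i\<bar> powr (Pj * th)" by (simp only: yy_def powr_powr)
      also have "Pj * th = 2" using Pp by (simp add: th_def)
      finally show ?thesis by (simp add: powr_numeral)
    qed
    ultimately show ?thesis using False by (simp add: cc_def mult_ac)
  qed
  have "(\<Sum>i\<in>Sj. cc q Pj Sj A V i * (u$i)^2) =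
      sig Pj Sj A V powr (q / Pj - 1) * (\<Sum>i\<in>Sj. xx i powr (1 - th) * yy i powr th)"
    by (simp add: eq1 sum_distrib_left)
  also have "\<dots> \<le> sig Pj Sj A V powr (q / Pj - 1) * ((\<Sum>i\<in>Sj. xx i) powr (1 - th) * (\<Sum>i\<in>Sj. yy i) powr th)"
    by (intro mult_left_mono holder_sum th fin) (auto simp: xx_def yy_def)
  also have "(\<Sum>i\<in>Sj. xx i) = sig Pj Sj A V" by (simp add: xx_def sig_def)
  also have "(\<Sum>i\<in>Sj. yy i) powr th = bn Pj Sj u ^ 2"
  proof -
    have bnyy: "bn Pj Sj u = (\<Sum>i\<in>Sj. yy i) powr (1/Pj)" by (simp add: bn_def yy_def)
    have "(\<Sum>i\<in>Sj. yy i) powr th = ((\<Sum>i\<in>Sj. yy i) powr (1/Pj)) powr 2"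
      by (simp add: powr_powr th_def)
    also have "\<dots> = bn Pj Sj u powr 2" by (simp only: bnyy)
    also have "\<dots> = bn Pj Sj u ^ 2" using bn_nonneg[of Pj Sj u] by (simp add: powr_numeral)
    finally show ?thesis .
  qed
  also have "sig Pj Sj A V powr (q / Pj - 1) * (sig Pj Sj A V powr (1 - th) * bn Pj Sj u ^ 2)
      = sig Pj Sj A V powr ((q - 2) / Pj) * bn Pj Sj u ^ 2"
  proof -
    have "sig Pj Sj A V powr (q / Pj - 1) * sig Pj Sj A V powr (1 - th) = sig Pj Sj A V powr ((q - 2) / Pj)"
    proof -
      have "sig Pj Sj A V powr (q / Pj - 1) * sig Pj Sj A V powr (1 - th) = sig Pj Sj A V powr ((q / Pj - 1) + (1 - th))"
        by (rule powr_add[symmetric])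
      also have "(q / Pj - 1) + (1 - th) = (q - 2) / Pj" using Pp by (simp add: th_def diff_divide_distrib)
      finally show ?thesis .
    qed
    then show ?thesis by (simp add: mult.assoc[symmetric])
  qed
  finally show ?thesis .
qed

lemma term_q_small:
  fixes s N al r q P :: real
  assumes q1: "1 \<le> q" "q \<le> 2" and Pp: "P > 0" and s0: "0 \<le> s" and N0: "0 \<le> N" and r0: "0 \<le> r"
    and al: "al = s powr (1/P)" and Nb: "N \<le> al * r"
  shows "s powr ((q - 2) / P) * N^2 \<le> N powr q * r powr (2 - q)"
proof (cases "s = 0 \<or> N = 0")
  case True
  then show ?thesis using r0 N0 by auto
next
  case False
  then have sp: "s > 0" and Np: "N > 0" using s0 N0 by auto
  have alp: "al > 0" using sp al by simp
  have rp: "r \<ge> N / al" using Nb alp by (simp add: field_simps)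
  have e1: "s powr ((q - 2) / P) = al powr (q - 2)" using al by (simp add: powr_powr)
  have e2: "N^2 = N powr q * N powr (2 - q)"
    using Np by (simp add: powr_add[symmetric] powr_numeral)
  have "s powr ((q - 2) / P) * N^2 = N powr q * (N powr (2 - q) * al powr (q - 2))"
    by (simp add: e1 e2 mult_ac)
  also have "N powr (2 - q) * al powr (q - 2) = (N / al) powr (2 - q)"
  proof -
    have "al powr (q - 2) = al powr (- (2 - q))" by simp
    also have "\<dots> = inverse (al powr (2 - q))" by (rule powr_minus)
    finally have a: "al powr (q - 2) = inverse (al powr (2 - q))" .
    have b: "(N / al) powr (2 - q) = N powr (2 - q) / al powr (2 - q)"
      using Np alp by (intro powr_divide)
    show ?thesis unfolding a b by (simp only: divide_inverse)
  qed
  also have "(N / al) powr (2 - q) \<le> r powr (2 - q)"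
    using rp Np alp q1 by (intro powr_mono2) auto
  finally show ?thesis using Np by (simp add: mult_left_mono)
qed


lemma fv_ineq:
  fixes P :: "'m::finite \<Rightarrow> real" and S :: "'m \<Rightarrow> 'k::finite set" and A :: "real^'n^'k"
    and V :: "real^'n^'n"
  assumes P2: "\<And>j. P j \<ge> 2" and q1: "q \<ge> 1"
    and cov: "(\<Union>j. S j) = UNIV" and disj: "\<And>j j'. j \<noteq> j' \<Longrightarrow> S j \<inter> S j' = {}"
    and sym: "transpose V = V" and pd: "pos_def_mat V"
    and GV: "GP P S q A V = c"
    and cdef: "c = (if q \<le> 2 then real CARD('n) else real CARD('n) powr (q/2))"
    and RR: "matrix_inv V ** matrix_inv V = Mw A w"
    and wdef: "w = (\<lambda>i. (real CARD('n) / c) * cc q (P (blk S i)) (S (blk S i)) A V i)"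
  shows "x \<bullet> (Mw A w *v x) \<le> mixP P S q (A *v x) ^ 2"
proof -
  define n where "n = real CARD('n)"
  have np: "n > 0" by (simp add: n_def)
  have cp: "c > 0" using cdef np by (simp add: n_def)
  have Pp: "\<And>j. P j > 0" using P2 by (smt (verit))
  have qp: "q > 0" using q1 by simp
  define u where "u = A *v x"
  define sg where "sg = (\<lambda>j. sig (P j) (S j) A V)"
  define N where "N = (\<lambda>j. bn (P j) (S j) u)"
  have N0: "N j \<ge> 0" for j by (simp add: N_def bn_nonneg)
  have sg0: "sg j \<ge> 0" for j by (simp add: sg_def sig_nonneg)
  have sumsg: "(\<Sum>j\<in>UNIV. sg j powr (q / P j)) = c"
    using GP_alt[of P S q A V] Pp GV by (simp add: sg_def less_imp_neq[symmetric])
  have ccnn: "0 \<le> cc q Pj Sj A V i" for Pj Sj i by (simp add: cc_def)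
  have Qeq: "x \<bullet> (Mw A w *v x) = (n / c) * (\<Sum>j\<in>UNIV. \<Sum>i\<in>S j. cc q (P j) (S j) A V i * (u$i)^2)"
  proof -
    have "x \<bullet> (Mw A w *v x) = (\<Sum>i\<in>UNIV. w i * (A$i \<bullet> x)^2)" by (rule Mw_quad)
    also have "\<dots> = (n / c) * (\<Sum>i\<in>UNIV. cc q (P (blk S i)) (S (blk S i)) A V i * (u$i)^2)"
      by (simp add: wdef n_def u_def Av_comp sum_distrib_left mult_ac)
    also have "(\<Sum>i\<in>UNIV. cc q (P (blk S i)) (S (blk S i)) A V i * (u$i)^2) =
        (\<Sum>j\<in>UNIV. \<Sum>i\<in>S j. cc q (P j) (S j) A V i * (u$i)^2)"
      by (rule sum_partition[OF cov disj, symmetric])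
    finally show ?thesis .
  qed
  have Qle: "x \<bullet> (Mw A w *v x) \<le> (n / c) * (\<Sum>j\<in>UNIV. sg j powr ((q - 2) / P j) * N j ^ 2)"
    unfolding Qeq sg_def N_def
    using np cp by (intro mult_left_mono sum_mono block_holder[OF pd P2]) auto
  define T where "T = (\<Sum>j\<in>UNIV. N j powr q)"
  have T0: "T \<ge> 0" by (simp add: T_def sum_nonneg)
  have mixT: "mixP P S q u = T powr (1/q)" by (simp add: mixP_def T_def N_def)
  have mix2: "mixP P S q u ^ 2 = T powr (2/q)"
  proof -
    have "mixP P S q u ^ 2 = (T powr (1/q)) powr 2" using T0 by (simp add: mixT powr_numeral)
    also have "\<dots> = T powr (2/q)" by (simp add: powr_powr)
    finally show ?thesis .
  qed
  show ?thesis
  proof (cases "q \<le> 2")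
    case True
    have nc: "n / c = 1" using True cdef np by (simp add: n_def)
    define R where "R = matrix_inv V"
    have inv: "invertible V" by (rule pd_invertible[OF pd])
    have Rsym: "transpose R = R" using inv_sym[OF sym inv] by (simp add: R_def)
    have VR: "V ** R = mat 1" using matrix_inv_works[OF inv] by (simp add: R_def)
    define r where "r = norm (R *v x)"
    have r0: "r \<ge> 0" by (simp add: r_def)
    have Qr: "x \<bullet> (Mw A w *v x) = r^2"
    proof -
      have "x \<bullet> (Mw A w *v x) = x \<bullet> (R *v (R *v x))"
        using RR by (simp add: R_def matrix_vector_mul_assoc)
      also have "\<dots> = (R *v x) \<bullet> (R *v x)" by (rule dot_sym[OF Rsym])
      finally show ?thesis by (simp add: r_def power2_norm_eq_inner)
    qed
    have Nb: "N j \<le> sg j powr (1 / P j) * r" for j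
    proof -
      have "\<bar>u$i\<bar> \<le> \<bar>(r *\<^sub>R tv A V)$i\<bar>" for i
      proof -
        have "x = V *v (R *v x)" using VR by (simp add: matrix_vector_mul_assoc)
        then have "u$i = A$i \<bullet> (V *v (R *v x))" by (metis u_def Av_comp)
        also have "\<dots> = (V *v A$i) \<bullet> (R *v x)" by (rule dot_sym[OF sym])
        finally have "\<bar>u$i\<bar> \<le> norm (V *v A$i) * r" by (simp add: r_def Cauchy_Schwarz_ineq2)
        then show ?thesis using r0 by (simp add: tv_def mult.commute)
      qed
      then have "N j \<le> bn (P j) (S j) (r *\<^sub>R tv A V)"
        unfolding N_def using Pp by (intro bn_mono) auto
      also have "\<dots> = r * bn (P j) (S j) (tv A V)" using Pp r0 by (simp add: bn_scale)
      finally show ?thesis by (simp add: bn_tv sg_def mult.commute)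
    qed
    have "(\<Sum>j\<in>UNIV. sg j powr ((q - 2) / P j) * N j ^ 2) \<le> (\<Sum>j\<in>UNIV. N j powr q * r powr (2 - q))"
      using q1 True Pp sg0 N0 r0 Nb by (intro sum_mono term_q_small) auto
    also have "\<dots> = r powr (2 - q) * T" by (simp add: T_def sum_distrib_right mult.commute)
    finally have r2: "r^2 \<le> r powr (2 - q) * T" using Qle Qr nc by simp
    show ?thesis
    proof (cases "r = 0")
      case True then show ?thesis using Qr by (simp add: u_def[symmetric])
    next
      case False
      then have rp: "r > 0" using r0 by simp
      have "r powr q * r powr (2 - q) = r^2" using rp by (simp add: powr_add[symmetric] powr_numeral)
      then have "r powr q * r powr (2 - q) \<le> T * r powr (2 - q)" using r2 by (simp add: mult.commute)
      then have "r powr q \<le> T" using rp by simp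
      then have "(r powr q) powr (1/q) \<le> T powr (1/q)" using rp qp by (intro powr_mono2) auto
      then have "r \<le> mixP P S q u" using rp qp by (simp add: powr_powr mixT)
      then have "r^2 \<le> mixP P S q u ^ 2" using r0 by (intro power_mono) auto
      then show ?thesis using Qr by (simp add: u_def)
    qed
  next
    case False
    then have q2: "q > 2" by simp
    have cq: "c = n powr (q/2)" using False cdef by (simp add: n_def)
    define th where "th = 2 / q"
    have th: "0 < th" "th \<le> 1" using q2 by (auto simp: th_def)
    have trm: "sg j powr ((q - 2) / P j) * N j ^ 2 = (sg j powr (q / P j)) powr (1 - th) * (N j powr q) powr th" for j
    proof -
      have "(sg j powr (q / P j)) powr (1 - th) = sg j powr ((q / P j) * (1 - th))" by (simp add: powr_powr)
      also have "(q / P j) * (1 - th) = (q - 2) / P j" using qp Pp[of j] by (simp add: th_def field_simps)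
      finally have a: "(sg j powr (q / P j)) powr (1 - th) = sg j powr ((q - 2) / P j)" .
      have "(N j powr q) powr th = N j powr 2" using qp by (simp add: powr_powr th_def)
      also have "\<dots> = N j ^ 2" using N0[of j] by (simp add: powr_numeral)
      finally show ?thesis using a by simp
    qed
    have "(\<Sum>j\<in>UNIV. sg j powr ((q - 2) / P j) * N j ^ 2) \<le>
        (\<Sum>j\<in>UNIV. sg j powr (q / P j)) powr (1 - th) * (\<Sum>j\<in>UNIV. N j powr q) powr th"
      unfolding trm by (intro holder_sum th) auto
    also have "\<dots> = c powr (1 - th) * T powr (2/q)" by (simp add: sumsg T_def th_def)
    finally have h: "(\<Sum>j\<in>UNIV. sg j powr ((q - 2) / P j) * N j ^ 2) \<le> c powr (1 - th) * T powr (2/q)" .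
    have cc1: "(n / c) * c powr (1 - th) = 1"
    proof -
      have "c powr (1 - th) = c / c powr th" using cp by (simp add: powr_diff)
      moreover have "c powr th = n" using np qp by (simp add: cq th_def powr_powr)
      ultimately show ?thesis using np cp by simp
    qed
    have "x \<bullet> (Mw A w *v x) \<le> (n / c) * (c powr (1 - th) * T powr (2/q))"
      using Qle h np cp by (smt (verit) divide_pos_pos mult_left_mono)
    also have "\<dots> = T powr (2/q)" using cc1 by (simp add: mult.assoc[symmetric])
    finally show ?thesis using mix2 by (simp add: u_def)
  qed
qed

lemma tendsto_mm:
  fixes f :: "'a \<Rightarrow> real^'n^'m" and g :: "'a \<Rightarrow> real^'p^'n"
  assumes "(f \<longlongrightarrow> a) F" "(g \<longlongrightarrow> b) F"
  shows "((\<lambda>k. f k ** g k) \<longlongrightarrow> a ** b) F"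
  unfolding matrix_matrix_mult_def using assms by (intro tendsto_intros)

lemma tendsto_det:
  fixes f :: "'a \<Rightarrow> real^'n^'n"
  assumes "(f \<longlongrightarrow> a) F"
  shows "((\<lambda>k. det (f k)) \<longlongrightarrow> det a) F"
  unfolding det_def using assms by (intro tendsto_intros)

definition cinv :: "real^'n^'n \<Rightarrow> real^'n^'n" where
  "cinv M = (\<chi> r s. det (\<chi> i j. if j = r then axis s 1 $ i else M$i$j) / det M)"

lemma minv_cramer:
  fixes M :: "real^'n^'n"
  assumes d: "det M \<noteq> 0"
  shows "matrix_inv M = cinv M"
proof -
  have inv: "invertible M" using d by (simp add: invertible_det_nz)
  have "matrix_inv M $ r $ s = cinv M $ r $ s" for r s
  proof -
    have "M *v (matrix_inv M *v axis s 1) = axis s 1"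
      using matrix_inv_works[OF inv] by (simp add: matrix_vector_mul_assoc)
    then have "matrix_inv M *v axis s 1 = (\<chi> k. det (\<chi> i j. if j = k then axis s 1 $ i else M$i$j) / det M)"
      using cramer[OF d] by blast
    moreover have "(matrix_inv M *v axis s 1) $ r = matrix_inv M $ r $ s"
      by (simp add: matrix_vector_mult_basis column_def)
    ultimately show ?thesis by (simp add: cinv_def)
  qed
  then show ?thesis by (simp add: vec_eq_iff)
qed

lemma tendsto_if_const: "(g \<longlongrightarrow> b) F \<Longrightarrow> ((\<lambda>k. if Q then a else g k) \<longlongrightarrow> (if Q then a else b)) F"
  by simp

lemma tendsto_minv:
  fixes f :: "'a \<Rightarrow> real^'n^'n"
  assumes lim: "(f \<longlongrightarrow> M) F" and d: "det M \<noteq> 0"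
  shows "((\<lambda>k. matrix_inv (f k)) \<longlongrightarrow> matrix_inv M) F"
proof -
  have dl: "((\<lambda>k. det (f k)) \<longlongrightarrow> det M) F" by (rule tendsto_det[OF lim])
  then have ev: "eventually (\<lambda>k. det (f k) \<noteq> 0) F" using d by (rule tendsto_imp_eventually_ne)
  have "((\<lambda>k. cinv (f k)) \<longlongrightarrow> cinv M) F"
  proof -
    have "((\<lambda>k. det (\<chi> i j. if j = r then axis s 1 $ i else f k $i$j)) \<longlongrightarrow>
           det (\<chi> i j. if j = r then axis s 1 $ i else M$i$j)) F" for r s :: 'n
      by (intro tendsto_det tendsto_intros tendsto_if_const lim)
    then show ?thesis unfolding cinv_def using d dl by (intro tendsto_intros) auto
  qed
  moreover have "eventually (\<lambda>k. cinv (f k) = matrix_inv (f k)) F"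
    using ev by eventually_elim (simp add: minv_cramer)
  ultimately show ?thesis using minv_cramer[OF d] by (simp add: tendsto_cong)
qed

lemma tendsto_Mw:
  fixes w :: "'a \<Rightarrow> real^'k"
  assumes "(w \<longlongrightarrow> wl) F"
  shows "((\<lambda>k. Mw A (\<lambda>i. w k $ i)) \<longlongrightarrow> Mw A (\<lambda>i. wl $ i)) F"
proof -
  have e: "Mw A (\<lambda>i. v $ i) = (\<chi> r s. \<Sum>i\<in>UNIV. v $ i * A$i$r * A$i$s)" for v :: "real^'k"
    by (simp add: vec_eq_iff Mw_entry)
  show ?thesis unfolding e using assms by (intro tendsto_intros)
qed

lemma tendsto_Max_fin:
  fixes g :: "'a \<Rightarrow> 'i \<Rightarrow> real"
  assumes "finite S" "S \<noteq> {}" "\<And>i. i \<in> S \<Longrightarrow> ((\<lambda>k. g k i) \<longlongrightarrow> l i) F"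
  shows "((\<lambda>k. Max ((g k) ` S)) \<longlongrightarrow> Max (l ` S)) F"
  using assms
proof (induction S rule: finite_ne_induct)
  case (singleton x)
  then show ?case by simp
next
  case (insert x S)
  have "((\<lambda>k. max (g k x) (Max ((g k) ` S))) \<longlongrightarrow> max (l x) (Max (l ` S))) F"
    using insert by (intro tendsto_max) auto
  then show ?case using insert by simp
qed

lemma bn_le_max:
  assumes Pp: "P > 0" and fin: "finite S" and ne: "S \<noteq> {}"
  shows "bn P S u \<le> real (card S) powr (1/P) * Max ((\<lambda>i. \<bar>u$i\<bar>) ` S)"
proof -
  define M where "M = Max ((\<lambda>i. \<bar>u$i\<bar>) ` S)"
  have Mge: "\<bar>u$i\<bar> \<le> M" if "i \<in> S" for i using fin that by (simp add: M_def)
  have M0: "M \<ge> 0" using Mge ne by (meson abs_ge_zero all_not_in_conv order_trans)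
  have "(\<Sum>i\<in>S. \<bar>u$i\<bar> powr P) \<le> (\<Sum>i\<in>S. M powr P)"
    using Mge Pp by (intro sum_mono powr_mono2) auto
  also have "\<dots> = real (card S) * M powr P" by simp
  finally have "bn P S u \<le> (real (card S) * M powr P) powr (1/P)"
    unfolding bn_def using Pp by (intro powr_mono2) (auto intro: sum_nonneg)
  also have "\<dots> = real (card S) powr (1/P) * M"
    using Pp M0 by (simp add: powr_mult powr_powr)
  finally show ?thesis by (simp add: M_def)
qed

lemma bn_ge_max:
  assumes Pp: "P > 0" and fin: "finite S" and ne: "S \<noteq> {}"
  shows "Max ((\<lambda>i. \<bar>u$i\<bar>) ` S) \<le> bn P S u"
proof -
  have "Max ((\<lambda>i. \<bar>u$i\<bar>) ` S) \<in> (\<lambda>i. \<bar>u$i\<bar>) ` S"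
    by (rule Max_in) (use fin ne in auto)
  then obtain i where "i \<in> S" "Max ((\<lambda>i. \<bar>u$i\<bar>) ` S) = \<bar>u$i\<bar>" by auto
  then show ?thesis using bn_ge_comp[OF Pp _ fin] by simp
qed

lemma bn_tendsto_inf:
  fixes f :: "'a \<Rightarrow> real^'k"
  assumes fin: "finite S" and ne: "S \<noteq> {}" and lim: "(f \<longlongrightarrow> v) F"
    and Pinf: "filterlim P at_top F"
  shows "((\<lambda>k. bn (P k) S (f k)) \<longlongrightarrow> Max ((\<lambda>i. \<bar>v$i\<bar>) ` S)) F"
proof -
  have evP: "eventually (\<lambda>k. P k > 0) F" using Pinf by (simp add: filterlim_at_top_dense)
  have Ml: "((\<lambda>k. Max ((\<lambda>i. \<bar>f k $ i\<bar>) ` S)) \<longlongrightarrow> Max ((\<lambda>i. \<bar>v$i\<bar>) ` S)) F"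
    using fin ne by (intro tendsto_Max_fin tendsto_intros lim)
  have cl: "((\<lambda>k. real (card S) powr (1 / P k)) \<longlongrightarrow> 1) F"
  proof -
    have "((\<lambda>k. inverse (P k)) \<longlongrightarrow> 0) F" by (rule tendsto_inverse_0_at_top[OF Pinf])
    then have "((\<lambda>k. real (card S) powr (inverse (P k))) \<longlongrightarrow> real (card S) powr 0) F"
      using fin ne by (intro tendsto_intros) (auto simp: card_gt_0_iff)
    then show ?thesis using fin ne by (simp add: divide_inverse)
  qed
  have up: "((\<lambda>k. real (card S) powr (1 / P k) * Max ((\<lambda>i. \<bar>f k $ i\<bar>) ` S)) \<longlongrightarrow>
      1 * Max ((\<lambda>i. \<bar>v$i\<bar>) ` S)) F"
    by (intro tendsto_mult cl Ml)
  show ?thesis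
  proof (rule tendsto_sandwich[OF _ _ Ml])
    show "eventually (\<lambda>k. Max ((\<lambda>i. \<bar>f k $ i\<bar>) ` S) \<le> bn (P k) S (f k)) F"
      using evP by eventually_elim (rule bn_ge_max[OF _ fin ne])
    show "eventually (\<lambda>k. bn (P k) S (f k) \<le> real (card S) powr (1 / P k) * Max ((\<lambda>i. \<bar>f k $ i\<bar>) ` S)) F"
      using evP by eventually_elim (rule bn_le_max[OF _ fin ne])
  qed (use up in simp)
qed

lemma bn_tendsto_fin:
  fixes f :: "'a \<Rightarrow> real^'k"
  assumes Pp: "P > 0" and lim: "(f \<longlongrightarrow> v) F"
  shows "((\<lambda>k. bn P S (f k)) \<longlongrightarrow> bn P S v) F"
proof -
  have "isCont (bn P S) v"
    using bn_continuous[OF Pp, of UNIV S] by (simp add: continuous_on_eq_continuous_at)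
  then show ?thesis using lim by (rule isCont_tendsto_compose)
qed

lemma fv:
  fixes P :: "'m::finite \<Rightarrow> real" and S :: "'m \<Rightarrow> 'k::finite set" and A :: "real^'n^'k"
  assumes P2: "\<And>j. P j \<ge> 2" and q1: "q \<ge> 1"
    and cov: "(\<Union>j. S j) = UNIV" and disj: "\<And>j j'. j \<noteq> j' \<Longrightarrow> S j \<inter> S j' = {}"
    and rankA: "rank A = CARD('n)"
    and cdef: "c = (if q \<le> 2 then real CARD('n) else real CARD('n) powr (q/2))"
  shows "\<exists>V (w::real^'k). transpose V = V \<and> pos_def_mat V \<and> GP P S q A V = c \<and>
     (\<forall>V'. transpose V' = V' \<and> psd V' \<and> GP P S q A V' \<le> c \<longrightarrow> det V' \<le> det V) \<and>
     (\<forall>i. 0 \<le> w$i) \<and> (\<forall>i. A$i = 0 \<longrightarrow> w$i = 0) \<and>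
     matrix_inv V ** matrix_inv V = Mw A (\<lambda>i. w$i) \<and>
     (\<forall>x. x \<bullet> (Mw A (\<lambda>i. w$i) *v x) \<le> mixP P S q (A *v x) ^ 2)"
proof -
  have cp: "c > 0" using cdef by simp
  have ex: "\<exists>V. transpose V = V \<and> pos_def_mat V \<and> GP P S q A V = c \<and> det V > 0 \<and>
     (\<forall>V'. transpose V' = V' \<and> psd V' \<and> GP P S q A V' \<le> c \<longrightarrow> det V' \<le> det V) \<and>
     matrix_inv V ** matrix_inv V =
       Mw A (\<lambda>i. (real CARD('n) / c) * cc q (P (blk S i)) (S (blk S i)) A V i)"
    apply (rule fv_core[where P=P and S=S and A=A and c=c and q=q])
    using P2 q1 cov disj rankA cp by auto
  then obtain V where V1: "transpose V = V" and V2: "pos_def_mat V" and V3: "GP P S q A V = c"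
     and V5: "\<forall>V'. transpose V' = V' \<and> psd V' \<and> GP P S q A V' \<le> c \<longrightarrow> det V' \<le> det V"
     and V6: "matrix_inv V ** matrix_inv V =
       Mw A (\<lambda>i. (real CARD('n) / c) * cc q (P (blk S i)) (S (blk S i)) A V i)"
    by blast
  define w where "w = (\<lambda>i. (real CARD('n) / c) * cc q (P (blk S i)) (S (blk S i)) A V i)"
  define wv where "wv = (\<chi> i. w i)"
  have ww: "(\<lambda>i. wv$i) = w" by (simp add: wv_def)
  have W1: "\<forall>i. 0 \<le> wv$i" using cp by (simp add: wv_def w_def cc_def)
  have W2: "\<forall>i. A$i = 0 \<longrightarrow> wv$i = 0" by (simp add: wv_def w_def cc_def)
  have W3: "matrix_inv V ** matrix_inv V = Mw A (\<lambda>i. wv$i)" using V6 by (simp only: ww w_def)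
  have W4: "\<forall>x. x \<bullet> (Mw A (\<lambda>i. wv$i) *v x) \<le> mixP P S q (A *v x) ^ 2"
  proof
    fix x
    show "x \<bullet> (Mw A (\<lambda>i. wv$i) *v x) \<le> mixP P S q (A *v x) ^ 2"
      unfolding ww
      apply (rule fv_ineq[where P=P and S=S and A=A and V=V and c=c and q=q and w=w])
      using P2 q1 cov disj V1 V2 V3 cdef W3 w_def ww by auto
  qed
  show ?thesis
    by (rule exI[of _ V], rule exI[of _ wv]) (intro conjI V1 V2 V3 V5 W1 W2 W3 W4)
qed

definition PK :: "('m \<Rightarrow> ereal) \<Rightarrow> nat \<Rightarrow> 'm \<Rightarrow> real" where
  "PK p k j = (if p j = \<infinity> then real k + 2 else real_of_ereal (p j))"

lemma ereal_ge2: "2 \<le> (pj::ereal) \<Longrightarrow> pj \<noteq> \<infinity> \<Longrightarrow> 2 \<le> real_of_ereal pj"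
  by (cases pj) auto

lemma PK_ge: "(\<And>j. 2 \<le> p j) \<Longrightarrow> 2 \<le> PK p k j"
  unfolding PK_def using ereal_ge2 by auto

lemma blk_lim:
  fixes pj :: ereal and f :: "nat \<Rightarrow> real^'k"
  assumes p2: "2 \<le> pj" and ne: "S \<noteq> {}" and fin: "finite S" and lim: "f \<longlonglongrightarrow> v"
    and rho: "strict_mono (\<rho>::nat \<Rightarrow> nat)"
  shows "(\<lambda>k. bn (if pj = \<infinity> then real (\<rho> k) + 2 else real_of_ereal pj) S (f k)) \<longlonglongrightarrow> blocknorm pj S v"
proof (cases "pj = \<infinity>")
  case True
  have "filterlim (\<lambda>k. real (\<rho> k) + 2) at_top sequentially"
  proof (rule filterlim_at_top_mono[OF filterlim_real_sequentially])
    show "eventually (\<lambda>k. real k \<le> real (\<rho> k) + 2) sequentially"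
    proof (intro always_eventually allI)
      fix k
      have "k \<le> \<rho> k" by (rule seq_suble[OF rho])
      then show "real k \<le> real (\<rho> k) + 2" by simp
    qed
  qed
  then have "(\<lambda>k. bn (real (\<rho> k) + 2) S (f k)) \<longlonglongrightarrow> Max ((\<lambda>i. \<bar>v$i\<bar>) ` S)"
    by (rule bn_tendsto_inf[OF fin ne lim])
  then show ?thesis using True by (simp add: blocknorm_def)
next
  case False
  have Pp: "real_of_ereal pj > 0" using ereal_ge2[OF p2 False] by simp
  have "(\<lambda>k. bn (real_of_ereal pj) S (f k)) \<longlonglongrightarrow> bn (real_of_ereal pj) S v"
    by (rule bn_tendsto_fin[OF Pp lim])
  then show ?thesis using False by (simp add: blocknorm_def bn_def)
qed

lemma blocknorm_nonneg:
  assumes "finite S" "S \<noteq> {}"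
  shows "0 \<le> blocknorm pj S u"
proof -
  obtain i where "i \<in> S" using assms by blast
  then have "\<bar>u$i\<bar> \<le> Max ((\<lambda>i. \<bar>u$i\<bar>) ` S)" using assms by (intro Max_ge) auto
  then have "0 \<le> Max ((\<lambda>i. \<bar>u$i\<bar>) ` S)" by (rule order_trans[OF abs_ge_zero])
  then show ?thesis by (simp add: blocknorm_def)
qed

lemma GP_lim:
  fixes p :: "'m::finite \<Rightarrow> ereal" and S :: "'m \<Rightarrow> 'k::finite set" and f :: "nat \<Rightarrow> real^'k"
  assumes p2: "\<And>j. 2 \<le> p j" and ne: "\<And>j. S j \<noteq> {}" and lim: "f \<longlonglongrightarrow> v"
    and rho: "strict_mono (\<rho>::nat \<Rightarrow> nat)" and qp: "q > 0"
  shows "(\<lambda>k. \<Sum>j\<in>UNIV. bn (PK p (\<rho> k) j) (S j) (f k) powr q) \<longlonglongrightarrow> (\<Sum>j\<in>UNIV. blocknorm (p j) (S j) v powr q)"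
proof (intro tendsto_sum tendsto_powr')
  fix j
  show "(\<lambda>k. bn (PK p (\<rho> k) j) (S j) (f k)) \<longlonglongrightarrow> blocknorm (p j) (S j) v"
    unfolding PK_def by (rule blk_lim[OF p2 ne _ lim rho]) simp
  show "blocknorm (p j) (S j) v \<noteq> 0 \<or> q > 0 \<and> eventually (\<lambda>k. 0 \<le> bn (PK p (\<rho> k) j) (S j) (f k)) sequentially"
    using qp by (simp add: bn_nonneg)
qed simp

lemma blocknorm_le:
  assumes p2: "2 \<le> pj" and fin: "finite S" and ne: "S \<noteq> {}" and r0: "r \<ge> 0"
    and le: "\<And>i. i \<in> S \<Longrightarrow> \<bar>u$i\<bar> \<le> r * \<bar>v$i\<bar>"
  shows "blocknorm pj S u \<le> r * blocknorm pj S v"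
proof (cases "pj = \<infinity>")
  case True
  have "Max ((\<lambda>i. \<bar>u$i\<bar>) ` S) \<le> r * Max ((\<lambda>i. \<bar>v$i\<bar>) ` S)"
  proof (subst Max_le_iff)
    show "\<forall>a\<in>(\<lambda>i. \<bar>u$i\<bar>) ` S. a \<le> r * Max ((\<lambda>i. \<bar>v$i\<bar>) ` S)"
    proof
      fix a assume "a \<in> (\<lambda>i. \<bar>u$i\<bar>) ` S"
      then obtain i where i: "i \<in> S" "a = \<bar>u$i\<bar>" by auto
      have "\<bar>v$i\<bar> \<le> Max ((\<lambda>i. \<bar>v$i\<bar>) ` S)" using fin i by (intro Max_ge) auto
      then have "r * \<bar>v$i\<bar> \<le> r * Max ((\<lambda>i. \<bar>v$i\<bar>) ` S)" using r0 by (rule mult_left_mono)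
      then show "a \<le> r * Max ((\<lambda>i. \<bar>v$i\<bar>) ` S)" using le[OF i(1)] i(2) by simp
    qed
  qed (use fin ne in auto)
  then show ?thesis using True by (simp add: blocknorm_def)
next
  case False
  define P where "P = real_of_ereal pj"
  have Pp: "P > 0" using ereal_ge2[OF p2 False] by (simp add: P_def)
  have "bn P S u \<le> bn P S (r *\<^sub>R v)"
    using le r0 Pp by (intro bn_mono) (auto simp: abs_mult)
  also have "\<dots> = r * bn P S v" using Pp r0 by (rule bn_scale)
  finally show ?thesis using False by (simp add: blocknorm_def bn_def P_def)
qed

lemma transpose_axis: "transpose A *v axis i 1 = A $ i"
  by (simp add: vec_eq_iff matrix_vector_mult_def transpose_def axis_def if_distrib
      del: transpose_matrix_vector cong: if_cong)

lemma alpha_tv: "alpha pj Sj A U = blocknorm pj Sj (tv A U)"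
  by (simp only: alpha_def tv_def transpose_axis)

lemma mixnorm_nonneg: "0 \<le> mixnorm p S q u"
  by (simp add: mixnorm_def)

theorem lemma4p2:
  fixes p :: "'m::finite \<Rightarrow> ereal" and S :: "'m \<Rightarrow> 'k::finite set"
    and q :: real and A :: "real^'n^'k"
  assumes p_ge: "\<And>j. 2 \<le> p j"
    and q_ge: "1 \<le> q"
    and S_nonempty: "\<And>j. S j \<noteq> {}"
    and S_disj: "\<And>j j'. j \<noteq> j' \<Longrightarrow> S j \<inter> S j' = {}"
    and S_cover: "(\<Union>j. S j) = UNIV"
    and rankA: "rank A = CARD('n)"
  shows "\<exists>(W::real^'k^'k) (U::real^'n^'n).
           (\<forall>i i'. i \<noteq> i' \<longrightarrow> W $ i $ i' = 0) \<and> (\<forall>i. 0 \<le> W $ i $ i) \<and>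
           is_inv_sqrt U (transpose A ** W ** A) \<and>
           (\<Sum>j\<in>UNIV. alpha (p j) (S j) A U powr q) =
              (if q \<le> 2 then real CARD('n) else real CARD('n) powr (q / 2)) \<and>
           (\<forall>x j. blocknorm (p j) (S j) (A *v x) \<le> alpha (p j) (S j) A U * norm (matrix_inv U *v x)
                \<and> alpha (p j) (S j) A U * norm (matrix_inv U *v x)
                    \<le> alpha (p j) (S j) A U * mixnorm p S q (A *v x))"
proof -
  define c where "c = (if q \<le> 2 then real CARD('n) else real CARD('n) powr (q / 2))"
  have cp: "c > 0" by (simp add: c_def)
  have qp: "q > 0" using q_ge by simp
  have PK2: "2 \<le> PK p k j" for k j by (rule PK_ge[OF p_ge])
  have PKp: "0 < PK p k j" for k j using PK2[of k j] by simp
  define Phi where "Phi = (\<lambda>k (V::real^'n^'n) (w::real^'k).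
     transpose V = V \<and> pos_def_mat V \<and> GP (PK p k) S q A V = c \<and>
     (\<forall>V'. transpose V' = V' \<and> psd V' \<and> GP (PK p k) S q A V' \<le> c \<longrightarrow> det V' \<le> det V) \<and>
     (\<forall>i. 0 \<le> w$i) \<and> (\<forall>i. A$i = 0 \<longrightarrow> w$i = 0) \<and>
     matrix_inv V ** matrix_inv V = Mw A (\<lambda>i. w$i) \<and>
     (\<forall>x. x \<bullet> (Mw A (\<lambda>i. w$i) *v x) \<le> mixP (PK p k) S q (A *v x) ^ 2))"
  have ex: "\<forall>k. \<exists>V w. Phi k V w"
  proof
    fix k
    show "\<exists>V w. Phi k V w" unfolding Phi_def
      apply (rule fv[where P="PK p k" and S=S and A=A and c=c and q=q])
      using PK2 q_ge S_cover S_disj rankA c_def by auto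
  qed
  then have "\<exists>Vf. \<forall>k. \<exists>w. Phi k (Vf k) w" by (rule choice)
  then obtain Vf where "\<forall>k. \<exists>w. Phi k (Vf k) w" by blast
  then have "\<exists>wf. \<forall>k. Phi k (Vf k) (wf k)" by (rule choice)
  then obtain wf where H: "\<And>k. Phi k (Vf k) (wf k)" by blast
  have F1: "transpose (Vf k) = Vf k" for k using H[of k] by (simp add: Phi_def)
  have F2: "pos_def_mat (Vf k)" for k using H[of k] by (simp add: Phi_def)
  have F3: "GP (PK p k) S q A (Vf k) = c" for k using H[of k] by (simp add: Phi_def)
  have F4: "\<And>V'. transpose V' = V' \<Longrightarrow> psd V' \<Longrightarrow> GP (PK p k) S q A V' \<le> c \<Longrightarrow> det V' \<le> det (Vf k)" for k
    using H[of k] by (simp add: Phi_def)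
  have F5: "0 \<le> wf k $ i" for k i using H[of k] by (simp add: Phi_def)
  have F6: "A$i = 0 \<Longrightarrow> wf k $ i = 0" for k i using H[of k] by (simp add: Phi_def)
  have F7: "matrix_inv (Vf k) ** matrix_inv (Vf k) = Mw A (\<lambda>i. wf k $ i)" for k
    using H[of k] by (simp add: Phi_def)
  have F8: "x \<bullet> (Mw A (\<lambda>i. wf k $ i) *v x) \<le> mixP (PK p k) S q (A *v x) ^ 2" for k x
    using H[of k] by (simp add: Phi_def)
  obtain C where C0: "C \<ge> 0" and Cb: "\<And>(V::real^'n^'n) T. (\<forall>i. norm (V *v A$i) \<le> T) \<Longrightarrow> norm V \<le> C * T"
    using rank_bound_mat[OF rankA] by blast
  have normV: "norm (Vf k) \<le> C * c powr (1/q)" for k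
  proof (rule Cb, rule allI)
    fix i
    show "norm (Vf k *v A$i) \<le> c powr (1/q)"
      by (rule GP_bound_comp[where P="PK p k" and S=S and A=A and V="Vf k" and c=c and q=q])
         (use S_cover PKp qp F3[of k] in auto)
  qed
  obtain eps where ep: "eps > 0" and feas: "\<And>P'. \<forall>j. P' j \<ge> 1 \<Longrightarrow> GP P' S q A (eps *\<^sub>R mat 1) \<le> c"
    using feasible_small[OF cp qp, of S A] by blast
  define dl where "dl = eps ^ CARD('n)"
  have dlp: "dl > 0" using ep by (simp add: dl_def)
  have detlow: "dl \<le> det (Vf k)" for k
  proof -
    have "det (eps *\<^sub>R (mat 1::real^'n^'n)) \<le> det (Vf k)"
    proof (rule F4)
      show "transpose (eps *\<^sub>R (mat 1::real^'n^'n)) = eps *\<^sub>R mat 1" by (simp add: transpose_scalar)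
      show "psd (eps *\<^sub>R (mat 1::real^'n^'n))"
        using ep by (simp add: psd_def scaleR_matrix_vector_assoc[symmetric])
      show "GP (PK p k) S q A (eps *\<^sub>R mat 1) \<le> c" using PK2 by (intro feas) (smt (verit))
    qed
    then show ?thesis by (simp add: dl_def det_scaleR_pow)
  qed
  have bV: "bounded (range Vf)"
    unfolding bounded_iff using normV by blast
  obtain r1 V0 where r1: "strict_mono r1" and limV1: "(Vf \<circ> r1) \<longlonglongrightarrow> V0"
    using bounded_imp_convergent_subsequence[OF bV] by blast
  have V0sym: "transpose V0 = V0"
    using closed_sequentially[OF closed_sym _ limV1] F1 by auto
  have Fpsd: "psd (Vf k)" for k
    unfolding psd_def
  proof
    fix x :: "real^'n"
    show "0 \<le> x \<bullet> (Vf k *v x)"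
    proof (cases "x = 0")
      case True then show ?thesis by simp
    next
      case False then show ?thesis using F2[of k] unfolding pos_def_mat_def by (simp add: less_imp_le)
    qed
  qed
  have V0psd: "psd V0"
    using closed_sequentially[OF closed_psd _ limV1] Fpsd by auto
  have V0det: "dl \<le> det V0"
  proof -
    have cl: "closed {V::real^'n^'n. dl \<le> det V}"
      by (intro closed_Collect_le continuous_on_const det_continuous)
    show ?thesis using closed_sequentially[OF cl _ limV1] detlow by auto
  qed
  have V0inv: "invertible V0" using V0det dlp by (simp add: invertible_det_nz)
  have V0pd: "pos_def_mat V0" by (rule psd_pd[OF V0sym V0psd V0inv])
  define R0 where "R0 = matrix_inv V0"
  have limR1: "(\<lambda>k. matrix_inv (Vf (r1 k))) \<longlonglongrightarrow> R0"
    unfolding R0_def using tendsto_minv[OF limV1] V0det dlp by (simp add: o_def)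
  have limM1: "(\<lambda>k. Mw A (\<lambda>i. wf (r1 k) $ i)) \<longlonglongrightarrow> R0 ** R0"
    using tendsto_mm[OF limR1 limR1] by (simp add: F7)
  have trM: "trace (Mw A (\<lambda>i. w $ i)) = (\<Sum>i\<in>UNIV. w $ i * (A$i \<bullet> A$i))" for w :: "real^'k"
    using trace_Mw[of A "\<lambda>i. w $ i" "mat 1"] by simp
  have limT: "(\<lambda>k. trace (Mw A (\<lambda>i. wf (r1 k) $ i))) \<longlonglongrightarrow> trace (R0 ** R0)"
    using limM1 unfolding trace_def by (intro tendsto_intros)
  obtain B where B: "\<And>k. norm (trace (Mw A (\<lambda>i. wf (r1 k) $ i))) \<le> B"
    using convergent_imp_bounded[OF limT] unfolding bounded_iff by blast
  define Bw where "Bw = (\<Sum>i\<in>UNIV. if A$i = 0 then 0 else B / (A$i \<bullet> A$i))"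
  have wbound: "\<bar>wf (r1 k) $ i\<bar> \<le> (if A$i = 0 then 0 else B / (A$i \<bullet> A$i))" for k i
  proof (cases "A$i = 0")
    case True then show ?thesis using F6 by simp
  next
    case False
    have ap: "A$i \<bullet> A$i > 0" using False by simp
    have "wf (r1 k) $ i * (A$i \<bullet> A$i) \<le> (\<Sum>i\<in>UNIV. wf (r1 k) $ i * (A$i \<bullet> A$i))"
      by (rule member_le_sum) (auto intro!: mult_nonneg_nonneg F5)
    also have "\<dots> \<le> B" using B[of k] by (simp add: trM)
    finally have "wf (r1 k) $ i \<le> B / (A$i \<bullet> A$i)" using ap by (simp add: field_simps)
    then show ?thesis using False F5[of "r1 k" i] by simp
  qed
  have bw: "bounded (range (\<lambda>k. wf (r1 k)))"
    unfolding bounded_iff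
  proof (intro exI ballI)
    fix y assume "y \<in> range (\<lambda>k. wf (r1 k))"
    then obtain k where y: "y = wf (r1 k)" by auto
    have "norm y \<le> (\<Sum>i\<in>UNIV. \<bar>y $ i\<bar>)" by (rule norm_le_l1_cart)
    also have "\<dots> \<le> Bw" unfolding Bw_def y by (intro sum_mono wbound)
    finally show "norm y \<le> Bw" .
  qed
  obtain r2 wl where r2: "strict_mono r2" and limw2: "((\<lambda>k. wf (r1 k)) \<circ> r2) \<longlonglongrightarrow> wl"
    using bounded_imp_convergent_subsequence[OF bw] by blast
  define rho where "rho = r1 \<circ> r2"
  have rho: "strict_mono rho" unfolding rho_def using r1 r2 by (rule strict_mono_o)
  have limw: "(\<lambda>k. wf (rho k)) \<longlonglongrightarrow> wl" using limw2 by (simp add: rho_def o_def)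
  have limV: "(\<lambda>k. Vf (rho k)) \<longlonglongrightarrow> V0"
    using LIMSEQ_subseq_LIMSEQ[OF limV1 r2] by (simp add: rho_def o_def)
  have limM: "(\<lambda>k. Mw A (\<lambda>i. wf (rho k) $ i)) \<longlonglongrightarrow> R0 ** R0"
    using LIMSEQ_subseq_LIMSEQ[OF limM1 r2] by (simp add: rho_def o_def)
  have limM': "(\<lambda>k. Mw A (\<lambda>i. wf (rho k) $ i)) \<longlonglongrightarrow> Mw A (\<lambda>i. wl $ i)"
    by (rule tendsto_Mw[OF limw])
  have MwEq: "Mw A (\<lambda>i. wl $ i) = R0 ** R0" using LIMSEQ_unique[OF limM' limM] .
  have wl0: "0 \<le> wl $ i" for i
  proof -
    have "(\<lambda>k. wf (rho k) $ i) \<longlonglongrightarrow> wl $ i" by (intro tendsto_intros limw)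
    then show ?thesis by (rule LIMSEQ_le_const) (use F5 in auto)
  qed
  have limtv: "(\<lambda>k. tv A (Vf (rho k))) \<longlonglongrightarrow> tv A V0"
  proof -
    have "isCont (tv A) V0" using tv_continuous[of UNIV A] by (simp add: continuous_on_eq_continuous_at)
    then show ?thesis using limV by (rule isCont_tendsto_compose)
  qed
  have limGP: "(\<lambda>k. \<Sum>j\<in>UNIV. bn (PK p (rho k) j) (S j) (tv A (Vf (rho k))) powr q) \<longlonglongrightarrow>
      (\<Sum>j\<in>UNIV. blocknorm (p j) (S j) (tv A V0) powr q)"
    by (rule GP_lim[OF p_ge S_nonempty limtv rho qp])
  moreover have "(\<lambda>k. \<Sum>j\<in>UNIV. bn (PK p (rho k) j) (S j) (tv A (Vf (rho k))) powr q) = (\<lambda>k. c)"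
    using F3 by (simp add: GP_def)
  ultimately have "(\<lambda>k. c) \<longlonglongrightarrow> (\<Sum>j\<in>UNIV. blocknorm (p j) (S j) (tv A V0) powr q)"
    by simp
  then have eq1: "(\<Sum>j\<in>UNIV. blocknorm (p j) (S j) (tv A V0) powr q) = c"
    using LIMSEQ_unique[OF tendsto_const] by metis
  have ineq: "x \<bullet> (Mw A (\<lambda>i. wl $ i) *v x) \<le> mixnorm p S q (A *v x) ^ 2" for x
  proof -
    have l1: "(\<lambda>k. x \<bullet> (Mw A (\<lambda>i. wf (rho k) $ i) *v x)) \<longlonglongrightarrow> x \<bullet> (Mw A (\<lambda>i. wl $ i) *v x)"
      unfolding Mw_quad by (intro tendsto_intros limw)
    have l2: "(\<lambda>k. \<Sum>j\<in>UNIV. bn (PK p (rho k) j) (S j) (A *v x) powr q) \<longlonglongrightarrow>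
        (\<Sum>j\<in>UNIV. blocknorm (p j) (S j) (A *v x) powr q)"
      by (rule GP_lim[OF p_ge S_nonempty tendsto_const rho qp])
    have l3: "(\<lambda>k. mixP (PK p (rho k)) S q (A *v x) ^ 2) \<longlonglongrightarrow> mixnorm p S q (A *v x) ^ 2"
      unfolding mixP_def mixnorm_def
      by (intro tendsto_intros tendsto_powr' l2) (use qp in \<open>auto simp: bn_nonneg sum_nonneg\<close>)
    show ?thesis by (rule LIMSEQ_le[OF l1 l3]) (use F8 in auto)
  qed
  define W where "W = diagm (\<lambda>i. wl $ i)"
  have MW: "transpose A ** W ** A = R0 ** R0" using MwEq by (simp add: Mw_def W_def)
  have VR: "V0 ** R0 = mat 1" and RV: "R0 ** V0 = mat 1"
    using matrix_inv_works[OF V0inv] by (simp_all add: R0_def)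
  have R0sym: "transpose R0 = R0" using inv_sym[OF V0sym V0inv] by (simp add: R0_def)
  have UUM: "V0 ** V0 ** (R0 ** R0) = mat 1"
  proof -
    have "V0 ** V0 ** (R0 ** R0) = V0 ** ((V0 ** R0) ** R0)" by (simp add: matrix_mul_assoc)
    also have "\<dots> = mat 1" by (simp add: VR)
    finally show ?thesis .
  qed
  have MUU: "(R0 ** R0) ** (V0 ** V0) = mat 1"
  proof -
    have "(R0 ** R0) ** (V0 ** V0) = R0 ** ((R0 ** V0) ** V0)" by (simp add: matrix_mul_assoc)
    also have "\<dots> = mat 1" by (simp add: RV)
    finally show ?thesis .
  qed
  have isq: "is_inv_sqrt V0 (transpose A ** W ** A)"
    unfolding is_inv_sqrt_def MW
  proof (intro conjI)
    show "invertible (R0 ** R0)" unfolding invertible_def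
      using UUM MUU by (intro exI[of _ "V0 ** V0"]) (simp add: matrix_mul_assoc)
  qed (use V0sym V0pd UUM in auto)
  have part1: "blocknorm (p j) (S j) (A *v x) \<le> alpha (p j) (S j) A V0 * norm (matrix_inv V0 *v x)" for x j
  proof -
    have "blocknorm (p j) (S j) (A *v x) \<le> norm (R0 *v x) * blocknorm (p j) (S j) (tv A V0)"
    proof (rule blocknorm_le[OF p_ge _ S_nonempty])
      fix i
      have "x = V0 *v (R0 *v x)" using VR by (simp add: matrix_vector_mul_assoc)
      then have "(A *v x) $ i = A$i \<bullet> (V0 *v (R0 *v x))" by (metis Av_comp)
      also have "\<dots> = (V0 *v A$i) \<bullet> (R0 *v x)" by (rule dot_sym[OF V0sym])
      finally have "\<bar>(A *v x) $ i\<bar> \<le> norm (V0 *v A$i) * norm (R0 *v x)"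
        by (simp add: Cauchy_Schwarz_ineq2)
      then show "\<bar>(A *v x) $ i\<bar> \<le> norm (R0 *v x) * \<bar>tv A V0 $ i\<bar>"
        by (simp add: tv_def mult.commute)
    qed auto
    then show ?thesis by (simp add: alpha_tv R0_def mult.commute)
  qed
  have part2: "alpha (p j) (S j) A V0 * norm (matrix_inv V0 *v x) \<le> alpha (p j) (S j) A V0 * mixnorm p S q (A *v x)" for x j
  proof (rule mult_left_mono)
    show "0 \<le> alpha (p j) (S j) A V0" unfolding alpha_tv by (rule blocknorm_nonneg[OF _ S_nonempty]) simp
    have "norm (R0 *v x) ^ 2 = x \<bullet> ((R0 ** R0) *v x)"
      by (simp add: power2_norm_eq_inner dot_sym[OF R0sym] matrix_vector_mul_assoc[symmetric])
    also have "\<dots> \<le> mixnorm p S q (A *v x) ^ 2" using ineq[of x] MwEq by simp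
    finally have "norm (R0 *v x) ^ 2 \<le> mixnorm p S q (A *v x) ^ 2" .
    then show "norm (matrix_inv V0 *v x) \<le> mixnorm p S q (A *v x)"
      unfolding R0_def using mixnorm_nonneg by (rule power2_le_imp_le)
  qed
  have Wdiag: "\<forall>i i'. i \<noteq> i' \<longrightarrow> W $ i $ i' = 0" by (simp add: W_def diagm_def)
  have Wnn: "\<forall>i. 0 \<le> W $ i $ i" by (simp add: W_def diagm_def wl0)
  have sumeq: "(\<Sum>j\<in>UNIV. alpha (p j) (S j) A V0 powr q) =
              (if q \<le> 2 then real CARD('n) else real CARD('n) powr (q / 2))"
    using eq1 by (simp add: alpha_tv c_def)
  show ?thesis
    apply (rule exI[of _ W], rule exI[of _ V0])
    apply (intro conjI)
    subgoal by (rule Wdiag)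
    subgoal by (rule Wnn)
    subgoal by (rule isq)
    subgoal by (rule sumeq)
    subgoal using part1 part2 by blast
    done
qed


end
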